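(* Let $A(q):=\sum_{k=1}^{\infty} \frac{q^{k} (q;q^2)_{k}}{(-q;q^2)_k (1+q^{2k})}$, viewed as a formal power series in $q$. Then, coefficientwise, $$\frac{1}{2}\big(A(q)-A(-q)\big)\equiv q\frac{(q^8;q^8)_{\infty}^4}{(q^4;q^4)_{\infty}^2}\pmod{4}.$$
   Context: $(a;q)_n=\prod_{j=0}^{n-1}(1-aq^j)$, $(a;q)_\infty=\prod_{j\ge0}(1-aq^j)$. *)

theory Defs
  imports "HOL-Computational_Algebra.Formal_Power_Series" "HOL-Number_Theory.Cong"
begin

definition fqpoch :: "rat fps \<Rightarrow> rat fps \<Rightarrow> nat \<Rightarrow> rat fps" where
  "fqpoch a b n = (\<Prod>j<n. 1 - a * b ^ j)"

text \<open>(q^m;q^m)_infinity for m >= 1, as a formal power series: its n-th coefficient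
  equals that of the finite product over j = 1..n (the remaining factors are 1 mod q^(n+1)).\<close>
definition qpinf :: "nat \<Rightarrow> rat fps" where
  "qpinf m = Abs_fps (\<lambda>n. fps_nth (\<Prod>j\<in>{1..n}. 1 - fps_X ^ (m * j)) n)"

definition Aterm :: "nat \<Rightarrow> rat fps" where
  "Aterm k = fps_X ^ k * fqpoch fps_X (fps_X ^ 2) k
     / (fqpoch (- fps_X) (fps_X ^ 2) k * (1 + fps_X ^ (2 * k)))"

text \<open>A(q) = sum_{k>=1} Aterm k; the k-th summand has order >= k, so the n-th
  coefficient of the series is the finite sum over k = 1..n.\<close>
definition Aser :: "rat fps" where
  "Aser = Abs_fps (\<lambda>n. \<Sum>k\<in>{1..n}. fps_nth (Aterm k) n)"

end

theory Submission
  imports Defs "HOL-Number_Theory.Cong"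
begin

definition Pq :: "'a::comm_ring_1 \<Rightarrow> nat \<Rightarrow> 'a" where
  "Pq q n = (\<Prod>j<n. 1 - q ^ Suc j)"

fun gb :: "'a::comm_ring_1 \<Rightarrow> nat \<Rightarrow> nat \<Rightarrow> 'a" where
  "gb q n 0 = 1"
| "gb q 0 (Suc k) = 0"
| "gb q (Suc n) (Suc k) = gb q n k + q ^ Suc k * gb q n (Suc k)"

lemma Pq_Suc: "Pq q (Suc n) = Pq q n * (1 - q ^ Suc n)"
  by (simp add: Pq_def)

lemma Pq_0[simp]: "Pq q 0 = 1" by (simp add: Pq_def)

lemma gb_zero: "n < k \<Longrightarrow> gb q n k = 0"
proof (induction n arbitrary: k)
  case 0 then show ?case by (cases k) auto
next
  case (Suc n) then show ?case by (cases k) auto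
qed

lemma gb_diag[simp]: "gb q n n = 1"
  by (induction n) (auto simp: gb_zero)

lemma gb_prod: "k \<le> n \<Longrightarrow> gb q n k * Pq q k * Pq q (n - k) = Pq q n"
proof (induction n arbitrary: k)
  case 0 then show ?case by simp
next
  case (Suc n)
  show ?case
  proof (cases k)
    case 0 then show ?thesis by simp
  next
    case (Suc k')
    show ?thesis
    proof (cases "k' = n")
      case True then show ?thesis using Suc by simp
    next
      case False
      with Suc \<open>k \<le> Suc n\<close> have kn: "Suc k' \<le> n" by simp
      have e1: "Suc n - k = Suc (n - Suc k')" using kn Suc by simp
      have IH1: "gb q n k' * Pq q k' * Pq q (n - k') = Pq q n" using Suc.IH kn by simp
      have IH2: "gb q n (Suc k') * Pq q (Suc k') * Pq q (n - Suc k') = Pq q n" using Suc.IH kn by simp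
      have nk: "n - k' = Suc (n - Suc k')" using kn by simp
      have "gb q (Suc n) k * Pq q k * Pq q (Suc n - k)
          = gb q n k' * Pq q (Suc k') * Pq q (Suc (n - Suc k'))
            + q ^ Suc k' * (gb q n (Suc k') * Pq q (Suc k') * Pq q (Suc (n - Suc k')))"
        using Suc e1 by (simp add: algebra_simps)
      also have "gb q n k' * Pq q (Suc k') * Pq q (Suc (n - Suc k'))
          = (gb q n k' * Pq q k' * Pq q (n - k')) * (1 - q ^ Suc k')"
        using nk by (simp add: Pq_Suc algebra_simps)
      also have "gb q n (Suc k') * Pq q (Suc k') * Pq q (Suc (n - Suc k'))
          = (gb q n (Suc k') * Pq q (Suc k') * Pq q (n - Suc k')) * (1 - q ^ (n - k'))"
        using nk by (simp add: Pq_Suc algebra_simps)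
      finally have "gb q (Suc n) k * Pq q k * Pq q (Suc n - k)
          = Pq q n * (1 - q ^ Suc k') + q ^ Suc k' * (Pq q n * (1 - q ^ (n - k')))"
        using IH1 IH2 by simp
      also have "\<dots> = Pq q n * (1 - q ^ (Suc k' + (n - k')))"
        by (simp add: algebra_simps power_add)
      also have "Suc k' + (n - k') = Suc n" using kn by simp
      finally show ?thesis by (simp add: Pq_Suc)
    qed
  qed
qed

lemma gb_pascal2:
  fixes q :: "'a::idom"
  assumes nz: "\<And>j. Pq q j \<noteq> 0"
  shows "gb q (Suc n) (Suc k) = q ^ (n - k) * gb q n k + gb q n (Suc k)"
proof (cases "k \<le> n")
  case False then show ?thesis by (simp add: gb_zero)
next
  case True
  show ?thesis
  proof (cases "k = n")
    case True then show ?thesis by (simp add: gb_zero)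
  next
    case False
    with True have kn: "Suc k \<le> n" by simp
    have nk: "n - k = Suc (n - Suc k)" using kn by simp
    have A: "gb q (Suc n) (Suc k) * (Pq q (Suc k) * Pq q (n - k)) = Pq q (Suc n)"
      using gb_prod[of "Suc k" "Suc n" q] kn by (simp add: mult.assoc)
    have B1: "gb q n k * (Pq q (Suc k) * Pq q (n - k)) = Pq q n * (1 - q ^ Suc k)"
      using gb_prod[of k n q] kn by (simp add: Pq_Suc algebra_simps)
    have P2: "Pq q (n - k) = Pq q (n - Suc k) * (1 - q ^ (n - k))"
      using nk Pq_Suc by metis
    have B2: "gb q n (Suc k) * (Pq q (Suc k) * Pq q (n - k)) = Pq q n * (1 - q ^ (n - k))"
      using gb_prod[of "Suc k" n q] kn unfolding P2 by (simp add: algebra_simps)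
    have "(q ^ (n - k) * gb q n k + gb q n (Suc k)) * (Pq q (Suc k) * Pq q (n - k))
         = q ^ (n - k) * (gb q n k * (Pq q (Suc k) * Pq q (n - k))) + gb q n (Suc k) * (Pq q (Suc k) * Pq q (n - k))"
      by (simp add: algebra_simps)
    also have "\<dots> = q ^ (n - k) * (Pq q n * (1 - q ^ Suc k)) + Pq q n * (1 - q ^ (n - k))"
      by (simp only: B1 B2)
    also have "\<dots> = Pq q n * (1 - q ^ (n - k + Suc k))"
      by (simp add: algebra_simps power_add)
    also have "n - k + Suc k = Suc n" using kn by simp
    finally have C: "(q ^ (n - k) * gb q n k + gb q n (Suc k)) * (Pq q (Suc k) * Pq q (n - k)) = Pq q (Suc n)"
      by (simp add: Pq_Suc)
    have "Pq q (Suc k) * Pq q (n - k) \<noteq> 0" using nz by simp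
    with A C show ?thesis by (metis mult_right_cancel)
  qed
qed

lemma gbrec:
  fixes q :: "'a::idom"
  assumes nz: "\<And>j. Pq q j \<noteq> 0"
  shows "gb q (Suc (Suc M)) i = q ^ i * gb q M i
     + (1 + q ^ Suc M) * (if 1 \<le> i then gb q M (i - 1) else 0)
     + (if 2 \<le> i then q ^ (M + 2 - i) * gb q M (i - 2) else 0)"
proof (cases i)
  case 0 then show ?thesis by simp
next
  case (Suc j)
  show ?thesis
  proof (cases j)
    case 0
    have "gb q (Suc (Suc M)) (Suc 0) = 1 + q * (q ^ M * gb q M 0 + gb q M (Suc 0))"
      using gb_pascal2[OF nz, of M 0] by simp
    then show ?thesis using Suc 0 by (simp add: algebra_simps)
  next
    case (Suc k)
    have a: "gb q (Suc M) (Suc k) = q ^ (M - k) * gb q M k + gb q M (Suc k)"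
      using gb_pascal2[OF nz] by blast
    have b: "gb q (Suc M) (Suc (Suc k)) = q ^ (M - Suc k) * gb q M (Suc k) + gb q M (Suc (Suc k))"
      using gb_pascal2[OF nz] by blast
    have c: "q ^ Suc (Suc k) * (q ^ (M - Suc k) * gb q M (Suc k)) = q ^ Suc M * gb q M (Suc k)"
    proof (cases "Suc k \<le> M")
      case True
      then have "Suc (Suc k) + (M - Suc k) = Suc M" by simp
      then show ?thesis by (metis mult.assoc power_add)
    next
      case False then show ?thesis by (simp add: gb_zero)
    qed
    have "gb q (Suc (Suc M)) i = gb q (Suc M) (Suc k) + q ^ Suc (Suc k) * gb q (Suc M) (Suc (Suc k))"
      using \<open>i = Suc j\<close> Suc by simp
    also have "\<dots> = q ^ (M - k) * gb q M k + gb q M (Suc k)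
        + (q ^ Suc (Suc k) * (q ^ (M - Suc k) * gb q M (Suc k)) + q ^ Suc (Suc k) * gb q M (Suc (Suc k)))"
      unfolding a b by (simp add: algebra_simps)
    also have "\<dots> = q ^ (M - k) * gb q M k + gb q M (Suc k)
        + (q ^ Suc M * gb q M (Suc k) + q ^ Suc (Suc k) * gb q M (Suc (Suc k)))"
      unfolding c ..
    finally show ?thesis using \<open>i = Suc j\<close> Suc by (simp add: algebra_simps)
  qed
qed

fun T :: "nat \<Rightarrow> nat" where
  "T 0 = 0"
| "T (Suc k) = T k + Suc k"

definition E :: "nat \<Rightarrow> nat \<Rightarrow> nat" where
  "E N i = (if N \<le> i then T (i - N) else T (N - i - 1))"

lemma E_L1: "i + E (Suc N) i = N + E N i"
proof -
  consider "Suc N \<le> i" | "i = N" | "i < N" by linarith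
  then show ?thesis
  proof cases
    case 1
    then have "i - N = Suc (i - Suc N)" by simp
    then show ?thesis using 1 by (simp add: E_def)
  next
    case 2 then show ?thesis by (simp add: E_def)
  next
    case 3
    then have "N - i = Suc (N - i - 1)" by simp
    then have "T (N - i) = T (N - i - 1) + (N - i)" by (metis T.simps(2))
    then show ?thesis using 3 by (simp add: E_def)
  qed
qed

lemma E_L2: "1 \<le> i \<Longrightarrow> E (Suc N) i = E N (i - 1)"
  by (auto simp: E_def)

lemma E_L3: "2 \<le> i \<Longrightarrow> i \<le> 2 * N + 2 \<Longrightarrow> E (Suc N) i + (2 * N + 2 - i) = Suc N + E N (i - 2)"
proof -
  assume a: "2 \<le> i" "i \<le> 2 * N + 2"
  consider "N + 2 \<le> i" | "i = N + 1" | "i < N + 1" by linarith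
  then show ?thesis
  proof cases
    case 1
    then have "i - Suc N = Suc (i - 2 - N)" by simp
    then have "T (i - Suc N) = T (i - 2 - N) + (i - Suc N)" by (metis T.simps(2))
    then show ?thesis using 1 a by (simp add: E_def)
  next
    case 2 then show ?thesis using a by (simp add: E_def)
  next
    case 3
    then have "N + 1 - i = Suc (N - i)" by simp
    have "T (N + 1 - i) = T (N - i) + (N + 1 - i)" using \<open>N + 1 - i = Suc (N - i)\<close> by (metis T.simps(2))
    moreover have "E (Suc N) i = T (N - i)" using 3 by (simp add: E_def)
    moreover have "E N (i - 2) = T (N + 1 - i)" using 3 a by (simp add: E_def)
    ultimately show ?thesis using 3 a by linarith
  qed
qed

definition cc :: "'a::comm_ring_1 \<Rightarrow> nat \<Rightarrow> nat \<Rightarrow> 'a" where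
  "cc q N i = q ^ E N i * gb q (2 * N) i"

lemma cc_rec:
  fixes q :: "'a::idom"
  assumes nz: "\<And>j. Pq q j \<noteq> 0"
  shows "cc q (Suc N) i = q ^ N * cc q N i + (1 + q ^ Suc (2 * N)) * (if 1 \<le> i then cc q N (i - 1) else 0)
     + q ^ Suc N * (if 2 \<le> i then cc q N (i - 2) else 0)"
proof -
  have g: "gb q (2 * Suc N) i = q ^ i * gb q (2 * N) i
     + (1 + q ^ Suc (2 * N)) * (if 1 \<le> i then gb q (2 * N) (i - 1) else 0)
     + (if 2 \<le> i then q ^ (2 * N + 2 - i) * gb q (2 * N) (i - 2) else 0)"
    using gbrec[OF nz, of "2 * N" i] by simp
  have t1: "q ^ E (Suc N) i * (q ^ i * gb q (2 * N) i) = q ^ N * cc q N i"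
    unfolding cc_def using E_L1[of i N] by (metis add.commute mult.assoc power_add)
  have t2: "q ^ E (Suc N) i * ((1 + q ^ Suc (2 * N)) * (if 1 \<le> i then gb q (2 * N) (i - 1) else 0))
      = (1 + q ^ Suc (2 * N)) * (if 1 \<le> i then cc q N (i - 1) else 0)"
    unfolding cc_def using E_L2[of i N] by (auto simp: algebra_simps)
  have t3: "q ^ E (Suc N) i * (if 2 \<le> i then q ^ (2 * N + 2 - i) * gb q (2 * N) (i - 2) else 0)
      = q ^ Suc N * (if 2 \<le> i then cc q N (i - 2) else 0)"
  proof (cases "2 \<le> i")
    case True
    show ?thesis
    proof (cases "i \<le> 2 * N + 2")
      case True
      with \<open>2 \<le> i\<close> have "E (Suc N) i + (2 * N + 2 - i) = Suc N + E N (i - 2)" by (rule E_L3)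
      then have "q ^ E (Suc N) i * q ^ (2 * N + 2 - i) = q ^ Suc N * q ^ E N (i - 2)"
        by (metis power_add)
      then show ?thesis using \<open>2 \<le> i\<close> unfolding cc_def by (simp add: mult.assoc[symmetric])
    next
      case False then show ?thesis by (simp add: gb_zero cc_def)
    qed
  next
    case False then show ?thesis by simp
  qed
  have "cc q (Suc N) i = q ^ E (Suc N) i * gb q (2 * Suc N) i" by (simp add: cc_def)
  also have "\<dots> = q ^ E (Suc N) i * (q ^ i * gb q (2 * N) i)
     + q ^ E (Suc N) i * ((1 + q ^ Suc (2 * N)) * (if 1 \<le> i then gb q (2 * N) (i - 1) else 0))
     + q ^ E (Suc N) i * (if 2 \<le> i then q ^ (2 * N + 2 - i) * gb q (2 * N) (i - 2) else 0)"
    unfolding g by (simp add: algebra_simps)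
  finally show ?thesis unfolding t1 t2 t3 .
qed

lemma cc_zero: "2 * N < i \<Longrightarrow> cc q N i = 0"
  by (simp add: cc_def gb_zero)

lemma sum_ext_cc: "2 * N \<le> L \<Longrightarrow> (\<Sum>i\<le>L. cc q N i) = (\<Sum>i\<le>2*N. cc q N i)"
proof (induction L)
  case 0 then show ?case by simp
next
  case (Suc L)
  show ?case
  proof (cases "2 * N = Suc L")
    case True then show ?thesis by simp
  next
    case False
    then have "2 * N \<le> L" using Suc.prems by simp
    then show ?thesis using Suc.IH by (simp add: cc_zero)
  qed
qed

lemma shift1: "(\<Sum>i\<le>Suc L. (if 1 \<le> i then f (i - 1) else 0)) = (\<Sum>i\<le>L. f i)"
  by (subst sum.atMost_Suc_shift) simp

lemma shift2: "(\<Sum>i\<le>Suc (Suc L). (if 2 \<le> i then f (i - 2) else 0)) = (\<Sum>i\<le>L. f i)"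
  by (subst sum.atMost_Suc_shift, subst sum.atMost_Suc_shift) simp

lemma finite_jtp:
  fixes q :: "'a::idom"
  assumes nz: "\<And>j. Pq q j \<noteq> 0"
  shows "(\<Sum>i\<le>2*N. cc q N i) = (\<Prod>j<N. (1 + q ^ Suc j) * (1 + q ^ j))"
proof (induction N)
  case 0 then show ?case by (simp add: cc_def E_def)
next
  case (Suc N)
  let ?S = "\<Sum>i\<le>2*N. cc q N i"
  have "(\<Sum>i\<le>2 * Suc N. cc q (Suc N) i)
     = q ^ N * (\<Sum>i\<le>Suc (Suc (2*N)). cc q N i)
       + (1 + q ^ Suc (2 * N)) * (\<Sum>i\<le>Suc (Suc (2*N)). (if 1 \<le> i then cc q N (i - 1) else 0))
       + q ^ Suc N * (\<Sum>i\<le>Suc (Suc (2*N)). (if 2 \<le> i then cc q N (i - 2) else 0))"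
  proof -
    have e: "2 * Suc N = Suc (Suc (2*N))" by simp
    have "(\<Sum>i\<le>2 * Suc N. cc q (Suc N) i) = (\<Sum>i\<le>Suc (Suc (2*N)). q ^ N * cc q N i
       + (1 + q ^ Suc (2 * N)) * (if 1 \<le> i then cc q N (i - 1) else 0)
       + q ^ Suc N * (if 2 \<le> i then cc q N (i - 2) else 0))"
      unfolding e by (rule sum.cong[OF refl], rule cc_rec[OF nz])
    then show ?thesis by (simp only: sum.distrib sum_distrib_left)
  qed
  also have "(\<Sum>i\<le>Suc (Suc (2*N)). cc q N i) = ?S" by (rule sum_ext_cc) simp
  also have "(\<Sum>i\<le>Suc (Suc (2*N)). (if 1 \<le> i then cc q N (i - 1) else 0)) = (\<Sum>i\<le>Suc (2*N). cc q N i)"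
    by (rule shift1)
  also have "(\<Sum>i\<le>Suc (2*N). cc q N i) = ?S" by (rule sum_ext_cc) simp
  also have "(\<Sum>i\<le>Suc (Suc (2*N)). (if 2 \<le> i then cc q N (i - 2) else 0)) = ?S"
    by (rule shift2)
  finally have "(\<Sum>i\<le>2 * Suc N. cc q (Suc N) i) = (q ^ N + (1 + q ^ Suc (2 * N)) + q ^ Suc N) * ?S"
    by (simp add: algebra_simps)
  also have "q ^ N + (1 + q ^ Suc (2 * N)) + q ^ Suc N = (1 + q ^ Suc N) * (1 + q ^ N)"
  proof -
    have "q ^ Suc (2 * N) = q ^ Suc N * q ^ N" by (simp add: power_add[symmetric] mult_2)
    then show ?thesis by (simp add: algebra_simps)
  qed
  finally show ?case using Suc.IH by (simp add: mult.commute)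
qed

definition eqm :: "nat \<Rightarrow> 'a::comm_ring_1 fps \<Rightarrow> 'a fps \<Rightarrow> bool" where
  "eqm k f g \<longleftrightarrow> (\<forall>i<k. fps_nth f i = fps_nth g i)"

lemma eqm_refl[simp]: "eqm k f f" by (simp add: eqm_def)
lemma eqm_sym: "eqm k f g \<Longrightarrow> eqm k g f" by (simp add: eqm_def)
lemma eqm_trans: "eqm k f g \<Longrightarrow> eqm k g h \<Longrightarrow> eqm k f h" by (simp add: eqm_def)
lemma eqm_add: "eqm k f f' \<Longrightarrow> eqm k g g' \<Longrightarrow> eqm k (f + g) (f' + g')" by (simp add: eqm_def)
lemma eqm_diff: "eqm k f f' \<Longrightarrow> eqm k g g' \<Longrightarrow> eqm k (f - g) (f' - g')" by (simp add: eqm_def)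
lemma eqm_mult: "eqm k f f' \<Longrightarrow> eqm k g g' \<Longrightarrow> eqm k (f * g) (f' * g')"
  unfolding eqm_def fps_mult_nth by (auto intro!: sum.cong)
lemma eqm_mono: "k' \<le> k \<Longrightarrow> eqm k f g \<Longrightarrow> eqm k' f g" by (simp add: eqm_def)

lemma eqm_sum: "(\<And>j. j \<in> J \<Longrightarrow> eqm k (f j) (g j)) \<Longrightarrow> eqm k (\<Sum>j\<in>J. f j) (\<Sum>j\<in>J. g j)"
  unfolding eqm_def by (simp add: fps_sum_nth)

lemma eqm_prod: "finite J \<Longrightarrow> (\<And>j. j \<in> J \<Longrightarrow> eqm k (f j) (g j)) \<Longrightarrow> eqm k (\<Prod>j\<in>J. f j) (\<Prod>j\<in>J. g j)"
  by (induction J rule: finite_induct) (auto intro: eqm_mult)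

lemma eqm_Xpow: "k \<le> e \<Longrightarrow> eqm k (fps_X ^ e * f) 0"
  unfolding eqm_def by (simp add: fps_X_power_mult_nth)

lemma eqm_one_minus: "k \<le> e \<Longrightarrow> eqm k (1 - fps_X ^ e) 1"
  using eqm_diff[OF eqm_refl eqm_Xpow[of k e 1]] by simp

definition psi :: "nat \<Rightarrow> rat fps" where
  "psi m = Abs_fps (\<lambda>t. if \<exists>a. m * T a = t then 1 else 0)"

lemma T_ge: "a \<le> T a" by (induction a) auto

lemma T_strict: "a < b \<Longrightarrow> T a < T b"
proof (induction b)
  case 0 then show ?case by simp
next
  case (Suc b) then show ?case by (cases "a = b") auto
qed

lemma T_inj: "T a = T b \<Longrightarrow> a = b"
  by (metis T_strict less_irrefl linorder_neqE_nat)

lemma Pq_X_nth0: "fps_nth (Pq (fps_X ^ m :: rat fps) n) 0 = (if 0 < m then 1 else 0 ^ n)"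
  by (induction n) (auto simp: Pq_Suc power_mult[symmetric] fps_mult_nth_0)

lemma Pq_X_nz: "0 < m \<Longrightarrow> Pq (fps_X ^ m :: rat fps) n \<noteq> 0"
  using Pq_X_nth0[of m n] by (metis one_neq_zero fps_zero_nth)

definition tail :: "'a::comm_ring_1 \<Rightarrow> nat \<Rightarrow> nat \<Rightarrow> 'a" where
  "tail q a b = (\<Prod>j<b. 1 - q ^ (a + Suc j))"

lemma Pq_split: "Pq q (a + b) = Pq q a * tail q a b"
  by (induction b) (auto simp: tail_def Pq_Suc algebra_simps)

lemma tail_eqm: "k \<le> m * Suc a \<Longrightarrow> eqm k (tail (fps_X ^ m :: rat fps) a b) 1"
proof -
  assume k: "k \<le> m * Suc a"
  have "eqm k (\<Prod>j<b. 1 - (fps_X ^ m :: rat fps) ^ (a + Suc j)) (\<Prod>j<b. 1)"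
  proof (rule eqm_prod)
    fix j assume "j \<in> {..<b}"
    have kk: "k \<le> m * (a + Suc j)" using k by (simp add: mult_le_mono2 le_trans)
    have e: "(fps_X ^ m :: rat fps) ^ (a + Suc j) = fps_X ^ (m * (a + Suc j))"
      by (simp only: power_mult)
    show "eqm k (1 - (fps_X ^ m :: rat fps) ^ (a + Suc j)) 1"
      unfolding e by (rule eqm_one_minus[OF kk])
  qed simp
  then show ?thesis by (simp add: tail_def)
qed

lemma gb_Pq_eqm:
  assumes m: "0 < m" and i: "i \<le> n" and k1: "k \<le> m * Suc i" and k2: "k \<le> m * Suc (n - i)"
  shows "eqm k (gb (fps_X ^ m :: rat fps) n i * Pq (fps_X ^ m) n) 1"
proof -
  let ?q = "fps_X ^ m :: rat fps"
  have s1: "Pq ?q n = Pq ?q i * tail ?q i (n - i)" using Pq_split[of ?q i "n - i"] i by simp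
  have s2: "Pq ?q n = Pq ?q (n - i) * tail ?q (n - i) i" using Pq_split[of ?q "n - i" i] i by simp
  have "Pq ?q i * (gb ?q n i * Pq ?q (n - i)) = Pq ?q i * tail ?q i (n - i)"
    using gb_prod[OF i, of ?q] s1 by (simp add: algebra_simps)
  then have c: "gb ?q n i * Pq ?q (n - i) = tail ?q i (n - i)"
    using Pq_X_nz[OF m] by simp
  have "gb ?q n i * Pq ?q n = tail ?q i (n - i) * tail ?q (n - i) i"
    unfolding s2 c[symmetric] by (simp add: algebra_simps)
  moreover have "eqm k (tail ?q i (n - i) * tail ?q (n - i) i) (1 * 1)"
    by (rule eqm_mult; rule tail_eqm; fact)
  ultimately show ?thesis by simp
qed

lemma Pq_eq_prod: "Pq (fps_X ^ m :: rat fps) i = (\<Prod>j\<in>{1..i}. 1 - fps_X ^ (m * j))"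
  unfolding Pq_def by (simp add: prod.atLeast1_atMost_eq power_mult)

lemma qpinf_nth:
  assumes m: "0 < m" and iL: "i \<le> L"
  shows "fps_nth (qpinf m) i = fps_nth (Pq (fps_X ^ m :: rat fps) L) i"
proof -
  let ?q = "fps_X ^ m :: rat fps"
  have "fps_nth (qpinf m) i = fps_nth (Pq ?q i) i"
    unfolding qpinf_def Pq_eq_prod by simp
  also have "Pq ?q L = Pq ?q i * tail ?q i (L - i)" using Pq_split[of ?q i "L - i"] iL by simp
  moreover have "eqm (Suc i) (Pq ?q i * tail ?q i (L - i)) (Pq ?q i * 1)"
    by (rule eqm_mult[OF eqm_refl], rule tail_eqm) (use m in \<open>cases m; simp\<close>)
  ultimately show ?thesis unfolding eqm_def by simp
qed

lemma qpinf_eqm: "0 < m \<Longrightarrow> k \<le> Suc L \<Longrightarrow> eqm k (qpinf m) (Pq (fps_X ^ m :: rat fps) L)"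
  unfolding eqm_def using qpinf_nth by simp

lemma psi_trunc:
  assumes m: "0 < m" and kL: "k \<le> L"
  shows "eqm k (\<Sum>a<L. fps_X ^ (m * T a)) (psi m)"
  unfolding eqm_def
proof (intro allI impI)
  fix t assume t: "t < k"
  have lhs: "fps_nth (\<Sum>a<L. fps_X ^ (m * T a) :: rat fps) t = (\<Sum>a<L. if t = m * T a then 1 else 0)"
    by (simp add: fps_sum_nth)
  show "fps_nth (\<Sum>a<L. fps_X ^ (m * T a)) t = fps_nth (psi m) t"
  proof (cases "\<exists>a. m * T a = t")
    case True
    then obtain a0 where a0: "m * T a0 = t" by blast
    have "a0 \<le> T a0" by (rule T_ge)
    also have "T a0 \<le> m * T a0" using m by simp
    finally have "a0 < L" using a0 t kL by simp
    have eq: "\<And>a. (t = m * T a) = (a = a0)" using a0 m T_inj by auto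
    have "(\<Sum>a<L. if t = m * T a then 1 else 0 :: rat) = (\<Sum>a<L. if a = a0 then 1 else 0)"
      by (simp add: eq)
    also have "\<dots> = 1" using \<open>a0 < L\<close> by simp
    finally show ?thesis using True lhs by (simp add: psi_def)
  next
    case False
    then have "(\<Sum>a<L. if t = m * T a then 1 else 0 :: rat) = 0" by (auto intro!: sum.neutral)
    then show ?thesis using False lhs by (simp add: psi_def)
  qed
qed

lemma sum_split_N: fixes f :: "nat \<Rightarrow> 'a::comm_monoid_add" and N M :: nat
  shows "(\<Sum>i\<le>N + M. f i) = (\<Sum>i<N. f i) + (\<Sum>a\<le>M. f (N + a))"
  by (induction M) (auto simp: lessThan_Suc_atMost[symmetric] add.assoc)

lemma bilateral:
  "(\<Sum>i\<le>2*N. (fps_X :: rat fps) ^ (m * E N i)) = (\<Sum>a<N. fps_X ^ (m * T a)) + (\<Sum>a\<le>N. fps_X ^ (m * T a))"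
proof -
  have "(\<Sum>i\<le>2*N. (fps_X :: rat fps) ^ (m * E N i)) = (\<Sum>i<N. fps_X ^ (m * E N i)) + (\<Sum>a\<le>N. fps_X ^ (m * E N (N + a)))"
    using sum_split_N[of "\<lambda>i. (fps_X :: rat fps) ^ (m * E N i)" N N] by (simp add: mult_2)
  also have "(\<Sum>i<N. (fps_X :: rat fps) ^ (m * E N i)) = (\<Sum>i<N. fps_X ^ (m * T (N - Suc i)))"
    by (rule sum.cong) (auto simp: E_def)
  also have "\<dots> = (\<Sum>a<N. fps_X ^ (m * T a))" by (rule sum.nat_diff_reindex)
  also have "(\<Sum>a\<le>N. (fps_X :: rat fps) ^ (m * E N (N + a))) = (\<Sum>a\<le>N. fps_X ^ (m * T a))"
    by (simp add: E_def)
  finally show ?thesis .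
qed

definition EE :: "'a::comm_ring_1 \<Rightarrow> nat \<Rightarrow> 'a" where
  "EE q n = (\<Prod>j<n. 1 + q ^ Suc j)"

lemma EE_Pq: "EE q n * Pq q n = Pq (q ^ 2) n"
proof (induction n)
  case 0 then show ?case by (simp add: EE_def)
next
  case (Suc n)
  have "EE q (Suc n) * Pq q (Suc n) = (EE q n * Pq q n) * ((1 + q ^ Suc n) * (1 - q ^ Suc n))"
    by (simp add: EE_def Pq_Suc algebra_simps)
  also have "(1 + q ^ Suc n) * (1 - q ^ Suc n) = 1 - (q ^ 2) ^ Suc n"
    by (simp add: algebra_simps power_mult[symmetric] power2_eq_square power_add[symmetric] mult_2)
  finally show ?case using Suc.IH by (simp add: Pq_Suc)
qed

lemma jtp_rhs: "(\<Prod>j<Suc n. (1 + q ^ Suc j) * (1 + q ^ j)) = EE q (Suc n) * ((1 + 1) * EE q n)"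
  unfolding EE_def prod.distrib by (simp add: prod.lessThan_Suc_shift del: prod.lessThan_Suc)

lemma E_small:
  assumes "E N i \<le> d" "N = 2 * d + 1" "i \<le> 2 * N"
  shows "d \<le> i \<and> d \<le> 2 * N - i"
proof (cases "N \<le> i")
  case True
  then have "i - N \<le> d" using assms T_ge[of "i - N"] by (simp add: E_def)
  then show ?thesis using True assms by simp
next
  case False
  then have "N - i - 1 \<le> d" using assms T_ge[of "N - i - 1"] by (simp add: E_def)
  then show ?thesis using False assms by arith
qed

theorem gauss:
  assumes m: "0 < m"
  shows "qpinf (2 * m) ^ 2 = psi m * qpinf m"
proof (rule fps_ext)
  fix d
  define K where "K = Suc d"
  define N where "N = 2 * d + 1"
  define q where "q = (fps_X ^ m :: rat fps)"
  define P where "P = Pq q (2 * N)"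
  have nz: "\<And>j. Pq q j \<noteq> 0" unfolding q_def using Pq_X_nz[OF m] .
  have m1: "\<And>x. x \<le> m * x" using m by (cases m) auto
  have qE: "\<And>e. q ^ e = fps_X ^ (m * e)" unfolding q_def by (simp add: power_mult)
  have trm: "eqm K (cc q N i * P) (fps_X ^ (m * E N i))" if i: "i \<le> 2 * N" for i
  proof (cases "K \<le> m * E N i")
    case True
    have "eqm K (fps_X ^ (m * E N i) * (gb q (2 * N) i * P)) 0" by (rule eqm_Xpow[OF True])
    moreover have "eqm K (fps_X ^ (m * E N i) * 1) 0" by (rule eqm_Xpow[OF True])
    ultimately show ?thesis unfolding cc_def qE by (simp add: mult.assoc eqm_def)
  next
    case False
    then have "E N i \<le> d" using m1[of "E N i"] unfolding K_def by linarith
    from E_small[OF this N_def i] have di: "d \<le> i" "d \<le> 2 * N - i" by auto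
    have k1: "K \<le> m * Suc i" by (rule le_trans[OF _ m1]) (simp add: K_def di)
    have k2: "K \<le> m * Suc (2 * N - i)" by (rule le_trans[OF _ m1]) (simp add: K_def di)
    have "eqm K (gb q (2 * N) i * P) 1" unfolding P_def q_def
      by (rule gb_Pq_eqm[OF m i k1 k2])
    then have "eqm K (q ^ E N i * (gb q (2 * N) i * P)) (q ^ E N i * 1)"
      by (rule eqm_mult[OF eqm_refl])
    then show ?thesis unfolding cc_def qE by (simp add: mult.assoc)
  qed
  have L1: "eqm K ((\<Sum>i\<le>2*N. cc q N i) * P) (psi m + psi m)"
  proof -
    have "eqm K (\<Sum>i\<le>2*N. cc q N i * P) (\<Sum>i\<le>2*N. fps_X ^ (m * E N i))"
      by (rule eqm_sum) (use trm in auto)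
    also have "(\<Sum>i\<le>2*N. (fps_X :: rat fps) ^ (m * E N i)) = (\<Sum>a<N. fps_X ^ (m * T a)) + (\<Sum>a\<le>N. fps_X ^ (m * T a))"
      by (rule bilateral)
    finally have a: "eqm K (\<Sum>i\<le>2*N. cc q N i * P) ((\<Sum>a<N. fps_X ^ (m * T a)) + (\<Sum>a<Suc N. fps_X ^ (m * T a)))"
      by (simp add: lessThan_Suc_atMost)
    have b: "eqm K ((\<Sum>a<N. fps_X ^ (m * T a)) + (\<Sum>a<Suc N. fps_X ^ (m * T a))) (psi m + psi m)"
      by (rule eqm_add; rule psi_trunc[OF m]) (auto simp: K_def N_def)
    show ?thesis using eqm_trans[OF a b] by (simp add: sum_distrib_right)
  qed
  have R0: "(\<Sum>i\<le>2*N. cc q N i) = EE q N * ((1 + 1) * EE q (N - 1))"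
    using finite_jtp[OF nz, of N] jtp_rhs[of q "N - 1"] by (simp add: N_def)
  have PN: "eqm K P (Pq q N)"
  proof -
    have "P = Pq q N * tail q N N" unfolding P_def using Pq_split[of q N N] by (simp add: mult_2)
    moreover have "eqm K (Pq q N * tail q N N) (Pq q N * 1)"
      by (rule eqm_mult[OF eqm_refl]) (unfold q_def, rule tail_eqm, rule le_trans[OF _ m1], simp add: K_def N_def)
    ultimately show ?thesis by simp
  qed
  have PN1: "eqm K P (Pq q (N - 1))"
  proof -
    have "P = Pq q (N - 1) * tail q (N - 1) (N + 1)" unfolding P_def using Pq_split[of q "N - 1" "N + 1"] by (simp add: N_def)
    moreover have "eqm K (Pq q (N - 1) * tail q (N - 1) (N + 1)) (Pq q (N - 1) * 1)"
      by (rule eqm_mult[OF eqm_refl]) (unfold q_def, rule tail_eqm, rule le_trans[OF _ m1], simp add: K_def N_def)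
    ultimately show ?thesis by simp
  qed
  have Q2: "eqm K (Pq (q ^ 2) (N - 1)) (Pq (q ^ 2) N)"
  proof -
    have "Pq (q ^ 2) N = Pq (q ^ 2) (N - 1) * (1 - (q ^ 2) ^ N)" using Pq_Suc[of "q ^ 2" "N - 1"] by (simp add: N_def)
    moreover have "eqm K (Pq (q ^ 2) (N - 1) * (1 - (q ^ 2) ^ N)) (Pq (q ^ 2) (N - 1) * 1)"
    proof (rule eqm_mult[OF eqm_refl])
      have "(q ^ 2) ^ N = fps_X ^ (m * (2 * N))" by (simp add: qE power_mult[symmetric] mult.commute)
      moreover have "K \<le> m * (2 * N)" using m1[of "2 * N"] by (simp add: K_def N_def)
      ultimately show "eqm K (1 - (q ^ 2) ^ N) 1" using eqm_one_minus by simp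
    qed
    ultimately show ?thesis using eqm_sym by simp
  qed
  have R1: "eqm K ((\<Sum>i\<le>2*N. cc q N i) * P * P) ((1 + 1) * Pq (q ^ 2) N * Pq (q ^ 2) N)"
  proof -
    have e: "(\<Sum>i\<le>2*N. cc q N i) * P * P = (1 + 1) * (EE q N * P) * (EE q (N - 1) * P)"
      unfolding R0 by (simp add: algebra_simps)
    have f1: "eqm K ((1 + 1) * (EE q N * P) * (EE q (N - 1) * P)) ((1 + 1) * (EE q N * Pq q N) * (EE q (N - 1) * Pq q (N - 1)))"
      by (intro eqm_mult eqm_refl PN PN1)
    have f2: "eqm K ((1 + 1) * (EE q N * Pq q N) * (EE q (N - 1) * Pq q (N - 1))) ((1 + 1) * Pq (q ^ 2) N * Pq (q ^ 2) N)"
      unfolding EE_Pq by (intro eqm_mult eqm_refl Q2)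
    show ?thesis unfolding e by (rule eqm_trans[OF f1 f2])
  qed
  have L2: "eqm K ((\<Sum>i\<le>2*N. cc q N i) * P * P) ((psi m + psi m) * P)"
    by (rule eqm_mult[OF L1 eqm_refl])
  have C: "eqm K ((psi m + psi m) * P) ((1 + 1) * Pq (q ^ 2) N * Pq (q ^ 2) N)"
    using eqm_trans[OF eqm_sym[OF L2] R1] .
  have P1: "eqm K P (qpinf m)" unfolding P_def q_def
    by (rule eqm_sym, rule qpinf_eqm[OF m]) (simp add: K_def N_def)
  have P2: "eqm K (Pq (q ^ 2) N) (qpinf (2 * m))"
  proof -
    have "q ^ 2 = fps_X ^ (2 * m)" by (simp add: qE mult.commute)
    moreover have "eqm K (qpinf (2 * m)) (Pq (fps_X ^ (2 * m)) N)"
      by (rule qpinf_eqm) (use m in \<open>auto simp: K_def N_def\<close>)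
    ultimately show ?thesis using eqm_sym by simp
  qed
  have "eqm K ((psi m + psi m) * qpinf m) ((1 + 1) * qpinf (2 * m) * qpinf (2 * m))"
    using eqm_trans[OF eqm_trans[OF eqm_mult[OF eqm_refl eqm_sym[OF P1]] C]
          eqm_mult[OF eqm_mult[OF eqm_refl P2] P2]] .
  then have "fps_nth ((psi m + psi m) * qpinf m) d = fps_nth ((1 + 1) * qpinf (2 * m) * qpinf (2 * m)) d"
    unfolding eqm_def K_def by simp
  moreover have "(psi m + psi m) * qpinf m = psi m * qpinf m + psi m * qpinf m"
    by (simp only: distrib_right)
  moreover have "(1 + 1) * qpinf (2 * m) * qpinf (2 * m) = qpinf (2 * m) ^ 2 + qpinf (2 * m) ^ 2"
    by (simp only: distrib_right mult_1_left power2_eq_square)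
  ultimately have "fps_nth (psi m * qpinf m) d + fps_nth (psi m * qpinf m) d
      = fps_nth (qpinf (2 * m) ^ 2) d + fps_nth (qpinf (2 * m) ^ 2) d"
    by (simp only: fps_add_nth)
  then show "fps_nth (qpinf (2 * m) ^ 2) d = fps_nth (psi m * qpinf m) d" by simp
qed

lemma sq_unique:
  fixes s t :: int
  assumes "0 < s" "0 < t" "s * s = t * t"
  shows "s = t"
proof (rule ccontr)
  assume "s \<noteq> t"
  then consider "s < t" | "t < s" by linarith
  then show False
  proof cases
    case 1 then have "s * s < t * t" using assms by (intro mult_strict_mono) auto
    then show False using assms by simp
  next
    case 2 then have "t * t < s * s" using assms by (intro mult_strict_mono) auto
    then show False using assms by simp
  qed
qed

lemma even_card_inv:
  assumes "finite X" "\<And>x. x \<in> X \<Longrightarrow> h x \<in> X" "\<And>x. x \<in> X \<Longrightarrow> h (h x) = x"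
    "\<And>x. x \<in> X \<Longrightarrow> h x \<noteq> x"
  shows "even (card X)"
  using assms
proof (induction "card X" arbitrary: X rule: less_induct)
  case less
  show ?case
  proof (cases "X = {}")
    case True then show ?thesis by simp
  next
    case False
    then obtain x where x: "x \<in> X" by blast
    define X' where "X' = X - {x, h x}"
    have hx: "h x \<in> X" "h x \<noteq> x" using less.prems x by auto
    have cX: "card X = Suc (Suc (card X'))"
    proof -
      have "card X' = card X - card {x, h x}" unfolding X'_def
        using less.prems(1) x hx by (subst card_Diff_subset) auto
      moreover have "card {x, h x} = 2" using hx by simp
      moreover have "2 \<le> card X"
        using card_mono[OF less.prems(1), of "{x, h x}"] x hx by simp
      ultimately show ?thesis by simp
    qed
    have "even (card X')"
    proof (rule less.hyps)
      show "card X' < card X" using cX by simp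
      show "finite X'" using less.prems(1) by (simp add: X'_def)
      fix y assume y: "y \<in> X'"
      then have yX: "y \<in> X" "y \<noteq> x" "y \<noteq> h x" by (auto simp: X'_def)
      show "h (h y) = y" "h y \<noteq> y" using less.prems yX by auto
      have "h y \<noteq> x" using less.prems(3)[OF yX(1)] yX by metis
      moreover have "h y \<noteq> h x" using less.prems(3) yX x by metis
      ultimately show "h y \<in> X'" using less.prems(2)[OF yX(1)] by (simp add: X'_def)
    qed
    then show ?thesis using cX by simp
  qed
qed

lemma card_inv_parity:
  assumes fin: "finite X" and h: "\<And>x. x \<in> X \<Longrightarrow> h x \<in> X" "\<And>x. x \<in> X \<Longrightarrow> h (h x) = x"
  shows "card X mod 2 = card {x\<in>X. h x = x} mod 2"
proof -
  have "even (card {x\<in>X. h x \<noteq> x})"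
  proof (rule even_card_inv)
    show "finite {x \<in> X. h x \<noteq> x}" using fin by simp
    fix x assume x: "x \<in> {x \<in> X. h x \<noteq> x}"
    then have x1: "x \<in> X" "h x \<noteq> x" by auto
    show "h (h x) = x" "h x \<noteq> x" using h x1 by auto
    have "h (h x) \<noteq> h x" using h(2)[OF x1(1)] x1(2) by simp
    then show "h x \<in> {x \<in> X. h x \<noteq> x}" using h(1)[OF x1(1)] by simp
  qed
  moreover have "card X = card {x\<in>X. h x = x} + card {x\<in>X. h x \<noteq> x}"
    using fin by (subst card_Un_disjoint[symmetric]) (auto intro: arg_cong[where f=card])
  ultimately show ?thesis by auto
qed

definition Zs :: "int \<Rightarrow> (int \<times> int \<times> int) set" where
  "Zs n = {(x,y,z). 0 < x \<and> 0 < y \<and> 0 < z \<and> x*x + 4*y*z = n}"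

definition ZB :: "int \<Rightarrow> (int \<times> int \<times> int) set" where
  "ZB n = {(x,y,z). 0 < x \<and> 0 < y \<and> 0 < z \<and> x*x + 4*y*z = n \<and> x + z \<noteq> y}"

definition zag :: "int \<times> int \<times> int \<Rightarrow> int \<times> int \<times> int" where
  "zag p = (case p of (x,y,z) \<Rightarrow>
     if x + z < y then (x + 2*z, z, y - x - z)
     else if x < 2*y then (2*y - x, y, x + z - y)
     else (x - 2*y, x + z - y, y))"

lemma Zs_sub: "Zs n \<subseteq> {0..n} \<times> {0..n} \<times> {0..n}"
proof
  fix p assume "p \<in> Zs n"
  then obtain x y z where p: "p = (x,y,z)" "0 < x" "0 < y" "0 < z" "x*x + 4*y*z = n"
    by (auto simp: Zs_def)
  have "x \<le> x * x" using p by (simp add: mult_le_cancel_left1)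
  moreover have "y \<le> y * z" "z \<le> y * z" using p by (simp_all add: mult_le_cancel_left1 mult_le_cancel_right1)
  moreover have "0 \<le> y * z" "0 \<le> x * x" using p by simp_all
  moreover have "4*y*z = 4*(y*z)" by simp
  ultimately have "0 \<le> x \<and> x \<le> n \<and> 0 \<le> y \<and> y \<le> n \<and> 0 \<le> z \<and> z \<le> n" using p by linarith
  then show "p \<in> {0..n} \<times> {0..n} \<times> {0..n}" using p by auto
qed

lemma finite_Zs: "finite (Zs n)"
  by (rule finite_subset[OF Zs_sub]) auto

lemma ZB_sub: "ZB n \<subseteq> Zs n" by (auto simp: ZB_def Zs_def)

lemma finite_ZB: "finite (ZB n)"
  using finite_subset[OF ZB_sub finite_Zs] .

lemma odd_x: "odd n \<Longrightarrow> x*x + 4*y*z = n \<Longrightarrow> x \<noteq> 2 * (y::int)"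
proof
  assume "odd n" "x*x + 4*y*z = n" "x = 2*y"
  then have "n = 2 * (2*y*y + 2*y*z)" by (simp add: algebra_simps)
  then show False using \<open>odd n\<close> by simp
qed

lemma zag_props:
  assumes n: "odd n" and p: "p \<in> ZB n"
  shows "zag p \<in> ZB n \<and> zag (zag p) = p \<and> (zag p = p \<longleftrightarrow> fst p = fst (snd p))"
proof -
  obtain x y z where pp: "p = (x,y,z)" by (cases p) auto
  have h: "0 < x" "0 < y" "0 < z" "x*x + 4*y*z = n" "x + z \<noteq> y" using p pp by (auto simp: ZB_def)
  have x2: "x \<noteq> 2 * y" using odd_x[OF n h(4)] .
  consider "x + z < y" | "\<not> x + z < y" "x < 2*y" | "\<not> x + z < y" "\<not> x < 2*y" by blast
  then show ?thesis
  proof cases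
    case 1
    have z1: "zag p = (x + 2*z, z, y - x - z)" using 1 by (simp add: zag_def pp)
    have z2: "zag (x + 2*z, z, y - x - z) = (x, y, z)" using 1 h by (simp add: zag_def)
    have "(x + 2*z)*(x + 2*z) + 4*z*(y - x - z) = x*x + 4*y*z" by (simp add: algebra_simps)
    then have "zag p \<in> ZB n" using 1 h by (simp add: z1 ZB_def)
    then show ?thesis using z1 z2 pp 1 h by auto
  next
    case 2
    have z1: "zag p = (2*y - x, y, x + z - y)" using 2 by (simp add: zag_def pp)
    have z2: "zag (2*y - x, y, x + z - y) = (x, y, z)" using 2 h by (simp add: zag_def)
    have "(2*y - x)*(2*y - x) + 4*y*(x + z - y) = x*x + 4*y*z" by (simp add: algebra_simps)
    then have "zag p \<in> ZB n" using 2 h by (simp add: z1 ZB_def)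
    then show ?thesis using z1 z2 pp 2 h by auto
  next
    case 3
    have z1: "zag p = (x - 2*y, x + z - y, y)" using 3 by (simp add: zag_def pp)
    have z2: "zag (x - 2*y, x + z - y, y) = (x, y, z)" using 3 h x2 by (simp add: zag_def)
    have "(x - 2*y)*(x - 2*y) + 4*(x + z - y)*y = x*x + 4*y*z" by (simp add: algebra_simps)
    then have "zag p \<in> ZB n" using 3 h x2 by (simp add: z1 ZB_def)
    then show ?thesis using z1 z2 pp 3 h x2 by auto
  qed
qed

lemma card_ZB_parity:
  assumes n: "odd n"
  shows "card (ZB n) mod 2 = card {p \<in> ZB n. fst p = fst (snd p)} mod 2"
proof -
  have "card (ZB n) mod 2 = card {p \<in> ZB n. zag p = p} mod 2"
    by (rule card_inv_parity[OF finite_ZB]) (use zag_props[OF n] in auto)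
  also have "{p \<in> ZB n. zag p = p} = {p \<in> ZB n. fst p = fst (snd p)}"
    using zag_props[OF n] by auto
  finally show ?thesis .
qed

definition sw :: "int \<times> int \<times> int \<Rightarrow> int \<times> int \<times> int" where
  "sw p = (case p of (x,y,z) \<Rightarrow> (x,z,y))"

lemma card_Zs_parity: "card (Zs n) mod 2 = card {p \<in> Zs n. fst (snd p) = snd (snd p)} mod 2"
proof -
  have "card (Zs n) mod 2 = card {p \<in> Zs n. sw p = p} mod 2"
    by (rule card_inv_parity[OF finite_Zs]) (auto simp: sw_def Zs_def algebra_simps)
  also have "{p \<in> Zs n. sw p = p} = {p \<in> Zs n. fst (snd p) = snd (snd p)}"
    by (auto simp: sw_def)
  finally show ?thesis .
qed

definition BB :: "int \<Rightarrow> (int \<times> int \<times> int) set" where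
  "BB n = {p \<in> Zs n. fst p + snd (snd p) = fst (snd p)}"

lemma Zs_split: "card (Zs n) = card (ZB n) + card (BB n)"
proof -
  have "Zs n = ZB n \<union> BB n" "ZB n \<inter> BB n = {}" by (auto simp: Zs_def ZB_def BB_def)
  then show ?thesis using finite_Zs[of n] by (simp add: card_Un_disjoint)
qed

lemma BB_square: "p \<in> BB n \<Longrightarrow> \<exists>s. s*s = n"
proof -
  assume "p \<in> BB n"
  then obtain x y z where h: "x + z = y" "x*x + 4*y*z = n" by (auto simp: BB_def Zs_def)
  have e: "(y + z) * (y + z) = (y - z)*(y - z) + 4*y*z" by (simp add: algebra_simps)
  have "y - z = x" using h by simp
  then have "(y + z) * (y + z) = x*x + 4*y*z" using e by simp
  then have "(y + z) * (y + z) = n" using h by simp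
  then show ?thesis by blast
qed

lemma BB_card:
  assumes s: "0 < s" "s * s = n"
  shows "card (BB n) = nat ((s - 1) div 2)"
proof -
  have "BB n = (\<lambda>z. (s - 2*z, s - z, z)) ` {1..(s - 1) div 2}"
  proof
    show "BB n \<subseteq> (\<lambda>z. (s - 2*z, s - z, z)) ` {1..(s - 1) div 2}"
    proof
      fix p assume "p \<in> BB n"
      then obtain x y z where p: "p = (x,y,z)" "0 < x" "0 < y" "0 < z" "x*x + 4*y*z = n" "x + z = y"
        by (auto simp: BB_def Zs_def)
      have e: "(y + z) * (y + z) = (y - z)*(y - z) + 4*y*z" by (simp add: algebra_simps)
      have "y - z = x" using p by simp
      then have "(y + z) * (y + z) = x*x + 4*y*z" using e by simp
      then have "(y + z) * (y + z) = s * s" using s p by simp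
      then have "y + z = s" using p s sq_unique[of "y + z" s] by simp
      then have "x = s - 2*z" "y = s - z" using p by auto
      moreover have "z \<le> (s - 1) div 2" using \<open>x = s - 2*z\<close> p by linarith
      ultimately show "p \<in> (\<lambda>z. (s - 2*z, s - z, z)) ` {1..(s - 1) div 2}"
        using p by (auto intro!: image_eqI[where x=z])
    qed
  next
    show "(\<lambda>z. (s - 2*z, s - z, z)) ` {1..(s - 1) div 2} \<subseteq> BB n"
    proof
      fix p assume "p \<in> (\<lambda>z. (s - 2*z, s - z, z)) ` {1..(s - 1) div 2}"
      then obtain z where z: "1 \<le> z" "z \<le> (s - 1) div 2" "p = (s - 2*z, s - z, z)" by auto
      have "(s - 2*z)*(s - 2*z) + 4*(s - z)*z = s * s" by (simp add: algebra_simps)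
      moreover have "0 < s - 2*z" using z by linarith
      ultimately show "p \<in> BB n" using z s by (auto simp: BB_def Zs_def)
    qed
  qed
  moreover have "inj_on (\<lambda>z. (s - 2*z, s - z, z)) {1..(s - 1) div 2}" by (auto simp: inj_on_def)
  ultimately have "card (BB n) = card {1..(s - 1) div 2}" by (simp add: card_image)
  then show ?thesis by simp
qed

lemma mod4_eq:
  fixes d e :: int
  assumes "(d * e) mod 4 = 1"
  shows "d mod 4 = e mod 4"
proof -
  have "((d mod 4) * (e mod 4)) mod 4 = 1" using assms by (simp add: mod_mult_eq)
  moreover have "d mod 4 \<in> {0,1,2,3}" "e mod 4 \<in> {0,1,2,3}" by auto
  ultimately show ?thesis by auto
qed

definition Dn :: "int \<Rightarrow> int set" where
  "Dn n = {d. 0 < d \<and> d dvd n \<and> d * d < n}"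

lemma FZ_card:
  assumes n: "n mod 4 = 1"
  shows "card {p \<in> ZB n. fst p = fst (snd p)} = card (Dn n)"
proof -
  let ?F = "{p \<in> ZB n. fst p = fst (snd p)}"
  have "bij_betw fst ?F (Dn n)"
  proof (rule bij_betw_byWitness[where f'="\<lambda>d. (d, d, (n div d - d) div 4)"])
    show "\<forall>a\<in>?F. (fst a, fst a, (n div fst a - fst a) div 4) = a"
    proof
      fix p assume "p \<in> ?F"
      then obtain y z where p: "p = (y,y,z)" "0 < y" "0 < z" "y*y + 4*y*z = n" by (auto simp: ZB_def)
      then have "n = y * (y + 4*z)" by (simp add: algebra_simps)
      then have "n div y = y + 4*z" using p by simp
      then show "(fst p, fst p, (n div fst p - fst p) div 4) = p" using p by simp
    qed
    show "fst ` ?F \<subseteq> Dn n"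
    proof
      fix d assume "d \<in> fst ` ?F"
      then obtain z where p: "0 < d" "0 < z" "d*d + 4*d*z = n" by (auto simp: ZB_def)
      then have "n = d * (d + 4*z)" by (simp add: algebra_simps)
      moreover have "0 < d * z" using p by simp
      ultimately show "d \<in> Dn n" using p by (auto simp: Dn_def)
    qed
    show "\<forall>d\<in>Dn n. fst (d, d, (n div d - d) div 4) = d" by simp
    show "(\<lambda>d. (d, d, (n div d - d) div 4)) ` Dn n \<subseteq> ?F"
    proof
      fix p assume "p \<in> (\<lambda>d. (d, d, (n div d - d) div 4)) ` Dn n"
      then obtain d where d: "0 < d" "d dvd n" "d*d < n" and p: "p = (d, d, (n div d - d) div 4)"
        by (auto simp: Dn_def)
      define e where "e = n div d"
      have ne: "n = d * e" using d by (simp add: e_def)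
      have "d mod 4 = e mod 4" using n ne mod4_eq by simp
      then have "4 dvd (e - d)" by (metis mod_eq_dvd_iff)
      then obtain z where z: "e - d = 4 * z" by blast
      have "d < e" using d ne by (metis mult_less_cancel_left_pos)
      then have "0 < z" using z by linarith
      have "d*d + 4*d*z = n" using ne z by (simp add: algebra_simps)
      then show "p \<in> ?F" using p d z \<open>0 < z\<close> by (simp add: ZB_def e_def[symmetric])
    qed
  qed
  then show ?thesis by (rule bij_betw_same_card)
qed

definition RSp :: "int \<Rightarrow> (int \<times> int) set" where
  "RSp n = {(u,v). 0 < u \<and> 0 < v \<and> odd u \<and> odd v \<and> u*u + v*v = 2*n}"

definition Fs :: "int \<Rightarrow> (int \<times> int \<times> int) set" where
  "Fs n = {p \<in> Zs n. fst (snd p) = snd (snd p)}"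

lemma Fs_L_bij:
  assumes n: "odd n"
  shows "bij_betw (\<lambda>(x,y,z). (\<bar>x - 2*y\<bar>, x + 2*y)) (Fs n) {p \<in> RSp n. fst p < snd p}"
proof (rule bij_betw_byWitness[where f'="\<lambda>(u,v). if odd ((u+v) div 2) then ((u+v) div 2, (v-u) div 4, (v-u) div 4)
                                             else ((v-u) div 2, (u+v) div 4, (u+v) div 4)"])
  show "\<forall>a\<in>Fs n. (\<lambda>(u,v). if odd ((u+v) div 2) then ((u+v) div 2, (v-u) div 4, (v-u) div 4)
                                             else ((v-u) div 2, (u+v) div 4, (u+v) div 4))
           ((\<lambda>(x,y,z). (\<bar>x - 2*y\<bar>, x + 2*y)) a) = a"
  proof
    fix p assume "p \<in> Fs n"
    then obtain x y where p: "p = (x,y,y)" "0 < x" "0 < y" "x*x + 4*y*y = n" by (auto simp: Fs_def Zs_def)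
    have ox: "odd x"
    proof
      assume "even x"
      then obtain k where "x = 2*k" by blast
      then have "n = 2*(2*k*k + 2*y*y)" using p by (simp add: algebra_simps)
      then show False using n by simp
    qed
    show "(\<lambda>(u,v). if odd ((u+v) div 2) then ((u+v) div 2, (v-u) div 4, (v-u) div 4)
                                             else ((v-u) div 2, (u+v) div 4, (u+v) div 4))
           ((\<lambda>(x,y,z). (\<bar>x - 2*y\<bar>, x + 2*y)) p) = p"
    proof (cases "2*y < x")
      case True
      then have a: "\<bar>x - 2*y\<bar> = x - 2*y" by simp
      have b: "(x - 2*y + (x + 2*y)) div 2 = x" by simp
      have c: "(x + 2*y - (x - 2*y)) div 4 = y" by simp
      show ?thesis using p ox by (simp add: a b c)
    next
      case False
      then have a: "\<bar>x - 2*y\<bar> = 2*y - x" by simp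
      have b: "(2*y - x + (x + 2*y)) div 2 = 2*y" by simp
      have c: "(x + 2*y - (2*y - x)) div 2 = x" by simp
      have d: "(2*y - x + (x + 2*y)) div 4 = y" by simp
      show ?thesis using p by (simp add: a b c d)
    qed
  qed
  show "(\<lambda>(x,y,z). (\<bar>x - 2*y\<bar>, x + 2*y)) ` Fs n \<subseteq> {p \<in> RSp n. fst p < snd p}"
  proof
    fix q assume "q \<in> (\<lambda>(x,y,z). (\<bar>x - 2*y\<bar>, x + 2*y)) ` Fs n"
    then obtain x y where q: "q = (\<bar>x - 2*y\<bar>, x + 2*y)" "0 < x" "0 < y" "x*x + 4*y*y = n"
      by (auto simp: Fs_def Zs_def)
    have ox: "odd x"
    proof
      assume "even x"
      then obtain k where "x = 2*k" by blast
      then have "n = 2*(2*k*k + 2*y*y)" using q by (simp add: algebra_simps)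
      then show False using n by simp
    qed
    have sq: "\<bar>x - 2*y\<bar> * \<bar>x - 2*y\<bar> = (x - 2*y) * (x - 2*y)" by (simp add: abs_mult_self_eq)
    have "(x - 2*y) * (x - 2*y) + (x + 2*y) * (x + 2*y) = 2 * (x*x + 4*y*y)" by (simp add: algebra_simps)
    moreover have "odd (x - 2*y)" "odd (x + 2*y)" using ox by auto
    moreover have "x - 2*y \<noteq> 0" using ox by auto
    ultimately show "q \<in> {p \<in> RSp n. fst p < snd p}" using q sq by (auto simp: RSp_def)
  qed
  show "\<forall>b\<in>{p \<in> RSp n. fst p < snd p}. (\<lambda>(x,y,z). (\<bar>x - 2*y\<bar>, x + 2*y))
          ((\<lambda>(u,v). if odd ((u+v) div 2) then ((u+v) div 2, (v-u) div 4, (v-u) div 4)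
                                             else ((v-u) div 2, (u+v) div 4, (u+v) div 4)) b) = b"
  proof
    fix q assume "q \<in> {p \<in> RSp n. fst p < snd p}"
    then obtain u v where q: "q = (u,v)" "0 < u" "odd u" "odd v" "u < v" by (auto simp: RSp_def)
    obtain i where i: "u = 2*i + 1" using q by (metis oddE)
    obtain j where j: "v = 2*j + 1" using q by (metis oddE)
    have s: "(u + v) div 2 = i + j + 1" "(v - u) div 2 = j - i" using i j by simp_all
    show "(\<lambda>(x,y,z). (\<bar>x - 2*y\<bar>, x + 2*y))
          ((\<lambda>(u,v). if odd ((u+v) div 2) then ((u+v) div 2, (v-u) div 4, (v-u) div 4)
                                             else ((v-u) div 2, (u+v) div 4, (u+v) div 4)) q) = q"
    proof (cases "odd (i + j + 1)")
      case True
      then have "even (j - i)" by auto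
      then obtain k where k: "j - i = 2 * k" by blast
      have "(v - u) div 4 = k" using i j k by simp
      moreover have "i + j + 1 - 2 * k = u" "i + j + 1 + 2 * k = v" using i j k by simp_all
      ultimately show ?thesis using q s True by simp
    next
      case False
      then obtain k where k: "i + j + 1 = 2 * k" by blast
      have "(u + v) div 4 = k" using i j k by simp
      moreover have "\<bar>j - i - 2 * k\<bar> = u" "j - i + 2 * k = v" using i j k q by simp_all
      ultimately show ?thesis using q s False by simp
    qed
  qed
  show "(\<lambda>(u,v). if odd ((u+v) div 2) then ((u+v) div 2, (v-u) div 4, (v-u) div 4)
                                             else ((v-u) div 2, (u+v) div 4, (u+v) div 4)) ` {p \<in> RSp n. fst p < snd p} \<subseteq> Fs n"
  proof
    fix r assume "r \<in> (\<lambda>(u,v). if odd ((u+v) div 2) then ((u+v) div 2, (v-u) div 4, (v-u) div 4)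
                                             else ((v-u) div 2, (u+v) div 4, (u+v) div 4)) ` {p \<in> RSp n. fst p < snd p}"
    then obtain u v where r: "r = (if odd ((u+v) div 2) then ((u+v) div 2, (v-u) div 4, (v-u) div 4)
                                             else ((v-u) div 2, (u+v) div 4, (u+v) div 4))"
      and q: "0 < u" "odd u" "odd v" "u < v" "u*u + v*v = 2*n" by (auto simp: RSp_def)
    obtain i where i: "u = 2*i + 1" using q by (metis oddE)
    obtain j where j: "v = 2*j + 1" using q by (metis oddE)
    have s: "(u + v) div 2 = i + j + 1" "(v - u) div 2 = j - i" using i j by simp_all
    have i0: "0 \<le> i" "i < j" using i j q by simp_all
    have nn: "n = 2*i*i + 2*i + 2*j*j + 2*j + 1" using q(5) i j by (simp add: algebra_simps)
    show "r \<in> Fs n"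
    proof (cases "odd (i + j + 1)")
      case True
      then have "even (j - i)" by auto
      then obtain k where k: "j - i = 2 * k" by blast
      have "(v - u) div 4 = k" using i j k by simp
      moreover have "(i + j + 1) * (i + j + 1) + 4 * k * k = n" using nn k
      proof -
        have "j = i + 2*k" using k by simp
        then show ?thesis using nn by (simp add: algebra_simps)
      qed
      moreover have "0 < k" using k i0 by simp
      ultimately show ?thesis using r s True i0 by (simp add: Fs_def Zs_def)
    next
      case False
      then obtain k where k: "i + j + 1 = 2 * k" by blast
      have "(u + v) div 4 = k" using i j k by simp
      moreover have "(j - i) * (j - i) + 4 * k * k = n"
      proof -
        have "2 * k = i + j + 1" using k by simp
        then have "(i + j + 1) * (i + j + 1) = (2 * k) * (2 * k)" by simp
        then have "4 * k * k = (i + j + 1) * (i + j + 1)" by simp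
        then show ?thesis using nn by (simp add: algebra_simps)
      qed
      moreover have "0 < k" using k i0 by simp
      ultimately show ?thesis using r s False i0 by (simp add: Fs_def Zs_def)
    qed
  qed
qed

lemma finite_RSp: "finite (RSp n)"
proof (rule finite_subset)
  show "RSp n \<subseteq> {0..2*n} \<times> {0..2*n}"
  proof
    fix q assume "q \<in> RSp n"
    then obtain u v where q: "q = (u,v)" "0 < u" "0 < v" "u*u + v*v = 2*n" by (auto simp: RSp_def)
    have "u \<le> u*u" "v \<le> v*v" using q by (simp_all add: mult_le_cancel_left1)
    moreover have "0 \<le> u*u" "0 \<le> v*v" by simp_all
    ultimately have "0 \<le> u \<and> u \<le> 2*n \<and> 0 \<le> v \<and> v \<le> 2*n" using q by linarith
    then show "q \<in> {0..2*n} \<times> {0..2*n}" using q by auto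
  qed
qed simp

lemma RSp_card:
  assumes n: "odd n"
  shows "card (RSp n) = card {p \<in> RSp n. fst p = snd p} + 2 * card (Fs n)"
proof -
  let ?L = "{p \<in> RSp n. fst p < snd p}" and ?G = "{p \<in> RSp n. snd p < fst p}" and ?D = "{p \<in> RSp n. fst p = snd p}"
  have fin: "finite ?L" "finite ?G" "finite ?D" using finite_RSp by auto
  have "RSp n = ?D \<union> (?L \<union> ?G)" by auto
  moreover have "card (?L \<union> ?G) = card ?L + card ?G"
    by (rule card_Un_disjoint) (use fin in auto)
  moreover have "card (?D \<union> (?L \<union> ?G)) = card ?D + card (?L \<union> ?G)"
    by (rule card_Un_disjoint) (use fin in auto)
  ultimately have "card (RSp n) = card ?D + (card ?L + card ?G)" by simp
  moreover have "card ?G = card ?L"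
  proof (rule bij_betw_same_card[where f="\<lambda>(u,v). (v,u)"])
    show "bij_betw (\<lambda>(u,v). (v,u)) ?G ?L"
      by (rule bij_betw_byWitness[where f'="\<lambda>(u,v). (v,u)"]) (auto simp: RSp_def add.commute)
  qed
  moreover have "card ?L = card (Fs n)" using bij_betw_same_card[OF Fs_L_bij[OF n]] by simp
  ultimately show ?thesis by simp
qed

lemma RSp_diag:
  assumes s: "0 < s" "s * s = n"
  shows "card {p \<in> RSp n. fst p = snd p} = (if odd n then 1 else 0)"
proof (cases "odd n")
  case True
  have "{p \<in> RSp n. fst p = snd p} = {(s,s)}"
  proof
    show "{p \<in> RSp n. fst p = snd p} \<subseteq> {(s,s)}"
    proof
      fix q assume "q \<in> {p \<in> RSp n. fst p = snd p}"
      then obtain u where q: "q = (u,u)" "0 < u" "u*u + u*u = 2*n" by (auto simp: RSp_def)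
      then have "u * u = s * s" using s by simp
      then have "u = s" using q s sq_unique by simp
      then show "q \<in> {(s,s)}" using q by simp
    qed
    have "odd s" using True s by auto
    then show "{(s,s)} \<subseteq> {p \<in> RSp n. fst p = snd p}" using s by (auto simp: RSp_def)
  qed
  then show ?thesis using True by simp
next
  case False
  have e: "{p \<in> RSp n. fst p = snd p} = {}"
  proof -
    { fix u assume "(u,u) \<in> RSp n"
      then have "odd u" "u*u + u*u = 2*n" by (auto simp: RSp_def)
      then have "odd n" by auto
      with False have False by simp }
    then show ?thesis by auto
  qed
  show ?thesis using False by (simp only: e card.empty) simp
qed

lemma RSp_diag0:
  assumes "\<not> (\<exists>s. s * s = n)"
  shows "card {p \<in> RSp n. fst p = snd p} = 0"
proof -
  have e: "{p \<in> RSp n. fst p = snd p} = {}" using assms by (auto simp: RSp_def)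
  show ?thesis by (simp only: e card.empty)
qed


lemma RSp_mod4:
  assumes n: "n mod 4 = 1"
  shows "int (card (RSp n)) mod 4 = (2 * int (card (Dn n)) + (if \<exists>s>0. s * s = n then (THE s. s > 0 \<and> s * s = n) else 0)) mod 4"
proof -
  have on: "odd n" using n by (metis dvd_mod_iff even_numeral odd_one)
  have a: "card (RSp n) = card {p \<in> RSp n. fst p = snd p} + 2 * card (Fs n)" by (rule RSp_card[OF on])
  have b: "card (Fs n) mod 2 = card (Zs n) mod 2" using card_Zs_parity[of n] by (simp add: Fs_def)
  have c: "card (ZB n) mod 2 = card (Dn n) mod 2" using card_ZB_parity[OF on] FZ_card[OF n] by simp
  have d: "card (Zs n) = card (ZB n) + card (BB n)" by (rule Zs_split)
  have e: "card (Fs n) mod 2 = (card (Dn n) + card (BB n)) mod 2"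
  proof -
    have "card (Fs n) mod 2 = (card (ZB n) + card (BB n)) mod 2" using b d by simp
    also have "\<dots> = (card (ZB n) mod 2 + card (BB n)) mod 2" by (rule mod_add_left_eq[symmetric])
    also have "\<dots> = (card (Dn n) mod 2 + card (BB n)) mod 2" using c by simp
    also have "\<dots> = (card (Dn n) + card (BB n)) mod 2" by (rule mod_add_left_eq)
    finally show ?thesis .
  qed
  have f: "int (2 * card (Fs n)) mod 4 = (2 * int (card (Dn n)) + 2 * int (card (BB n))) mod 4"
  proof -
    have "int (card (Fs n)) mod 2 = (int (card (Dn n)) + int (card (BB n))) mod 2"
      using e by (metis of_nat_add of_nat_mod of_nat_numeral)
    then have "2 * (int (card (Fs n)) mod 2) = 2 * ((int (card (Dn n)) + int (card (BB n))) mod 2)" by simp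
    then have "(2 * int (card (Fs n))) mod (2 * 2) = (2 * (int (card (Dn n)) + int (card (BB n)))) mod (2 * 2)"
      by (simp only: mod_mult_mult1)
    then show ?thesis by (simp add: algebra_simps)
  qed
  show ?thesis
  proof (cases "\<exists>s>0. s * s = n")
    case True
    then obtain s where s: "s > 0" "s * s = n" by blast
    have th: "(THE s. s > 0 \<and> s * s = n) = s" using s sq_unique by blast
    have "odd s" using on s by auto
    then obtain j where j: "s = 2 * j + 1" by (metis oddE)
    have diag: "card {p \<in> RSp n. fst p = snd p} = 1" using RSp_diag[OF s] on by simp
    have bb: "card (BB n) = nat ((s - 1) div 2)" by (rule BB_card[OF s])
    have "int (card (BB n)) = j" using bb j s by simp
    have "int (card (RSp n)) = 1 + int (2 * card (Fs n))" using a diag by simp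
    then have "int (card (RSp n)) mod 4 = (1 + int (2 * card (Fs n))) mod 4" by simp
    also have "\<dots> = (1 + (2 * int (card (Dn n)) + 2 * int (card (BB n)))) mod 4"
      by (rule mod_add_cong[OF refl f])
    finally have "int (card (RSp n)) mod 4 = (1 + (2 * int (card (Dn n)) + 2 * j)) mod 4"
      using \<open>int (card (BB n)) = j\<close> by simp
    then show ?thesis using True th j by (simp add: algebra_simps)
  next
    case False
    have nsq: "\<not> (\<exists>s. s * s = n)"
    proof
      assume "\<exists>s. s * s = n"
      then obtain s where s: "s * s = n" by blast
      then have "s \<noteq> 0" using n by auto
      then have "\<bar>s\<bar> > 0" "\<bar>s\<bar> * \<bar>s\<bar> = n" using s by (auto simp: abs_mult_self_eq)
      then show False using False by blast
    qed
    have diag: "card {p \<in> RSp n. fst p = snd p} = 0" using RSp_diag0[OF nsq] .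
    have bb: "BB n = {}" using BB_square nsq by blast
    have ite: "(if \<exists>s>0. s * s = n then (THE s. s > 0 \<and> s * s = n) else 0) = 0"
      by (rule if_not_P[OF False])
    have "int (card (RSp n)) = int (2 * card (Fs n))" using a diag by simp
    then show ?thesis unfolding ite using f bb by simp
  qed
qed

lemma mod4_sum1: fixes d e :: int assumes "(d * e) mod 4 = 1" shows "(d + e) mod 4 = 2"
proof -
  have "((d mod 4) * (e mod 4)) mod 4 = 1" using assms by (simp add: mod_mult_eq)
  moreover have "d mod 4 \<in> {0,1,2,3}" "e mod 4 \<in> {0,1,2,3}" by auto
  moreover have "(d + e) mod 4 = (d mod 4 + e mod 4) mod 4" by (simp add: mod_add_eq)
  ultimately show ?thesis by auto
qed

lemma mod4_sum3: fixes d e :: int assumes "(d * e) mod 4 = 3" shows "(d + e) mod 4 = 0"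
proof -
  have "((d mod 4) * (e mod 4)) mod 4 = 3" using assms by (simp add: mod_mult_eq)
  moreover have "d mod 4 \<in> {0,1,2,3}" "e mod 4 \<in> {0,1,2,3}" by auto
  moreover have "(d + e) mod 4 = (d mod 4 + e mod 4) mod 4" by (simp add: mod_add_eq)
  ultimately show ?thesis by auto
qed

definition sig :: "int \<Rightarrow> int" where
  "sig n = (\<Sum>d\<in>{d. 0 < d \<and> d dvd n}. d)"

lemma sig_split:
  assumes n: "0 < n"
  shows "sig n = (\<Sum>d\<in>Dn n. d + n div d) + (\<Sum>d\<in>{d. 0 < d \<and> d * d = n}. d)"
proof -
  let ?Div = "{d. 0 < d \<and> d dvd n}"
  let ?Up = "{d. 0 < d \<and> d dvd n \<and> n < d * d}"
  let ?Sq = "{d. 0 < d \<and> d * d = n}"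
  have finDiv: "finite ?Div" by (rule finite_subset[of _ "{1..n}"]) (auto simp: n zdvd_imp_le)
  have fD: "finite (Dn n)" "finite ?Up" "finite ?Sq"
    by (rule finite_subset[OF _ finDiv]; auto simp: Dn_def)+
  have sqd: "?Sq \<subseteq> ?Div" by auto
  have "?Div = Dn n \<union> (?Up \<union> ?Sq)" by (auto simp: Dn_def)
  moreover have "Dn n \<inter> (?Up \<union> ?Sq) = {}" "?Up \<inter> ?Sq = {}" by (auto simp: Dn_def)
  ultimately have S1: "sig n = sum id (Dn n) + (sum id ?Up + sum id ?Sq)"
    unfolding sig_def using fD by (simp add: sum.union_disjoint)
  have h3: "n div (n div d) = d" if d0: "0 < d" and dd: "d dvd n" for d
  proof -
    obtain e where e: "n = d * e" using dd dvdE by blast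
    then have "e \<noteq> 0" using n by auto
    then show ?thesis using e d0 by simp
  qed
  have h1: "n div d \<in> ?Up" if d: "d \<in> Dn n" for d
  proof -
    have d1: "0 < d" "d dvd n" "d * d < n" using d by (auto simp: Dn_def)
    then obtain e where e: "n = d * e" by blast
    have ep: "0 < e" using e d1 n by (auto simp: zero_less_mult_iff)
    have de: "d < e" using e d1 by (metis mult_less_cancel_left_pos)
    have nd: "n div d = e" using e d1 by simp
    have "n < e * e" using de e ep by (simp add: mult_strict_right_mono)
    then show "n div d \<in> ?Up" using nd e ep by auto
  qed
  have h2: "n div d \<in> Dn n" if d: "d \<in> ?Up" for d
  proof -
    have d1: "0 < d" "d dvd n" "n < d * d" using d by auto
    then obtain e where e: "n = d * e" by blast
    have ep: "0 < e" using e d1 n by (auto simp: zero_less_mult_iff)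
    have de: "e < d" using e d1 by (metis mult_less_cancel_left_pos)
    have nd: "n div d = e" using e d1 by simp
    have "e * e < n" using de e ep by (simp add: mult_strict_right_mono)
    then show "n div d \<in> Dn n" using nd e ep by (auto simp: Dn_def)
  qed
  have S2: "sum id ?Up = (\<Sum>d\<in>Dn n. n div d)"
    by (rule sum.reindex_bij_witness[where i="\<lambda>d. n div d" and j="\<lambda>d. n div d"])
       (use h1 h2 h3 in \<open>auto simp: Dn_def\<close>)
  show ?thesis using S1 S2 by (simp add: sum.distrib)
qed

lemma sig_mod4_1:
  assumes n: "n mod 4 = 1" "0 < n"
  shows "sig n mod 4 = (2 * int (card (Dn n)) + (if \<exists>s>0. s * s = n then (THE s. s > 0 \<and> s * s = n) else 0)) mod 4"
proof -
  have "(\<Sum>d\<in>Dn n. d + n div d) mod 4 = (\<Sum>d\<in>Dn n. (d + n div d) mod 4) mod 4" by (simp add: mod_sum_eq)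
  also have "(\<Sum>d\<in>Dn n. (d + n div d) mod 4) = (\<Sum>d\<in>Dn n. 2)"
  proof (rule sum.cong[OF refl])
    fix d assume "d \<in> Dn n"
    then have "n = d * (n div d)" by (auto simp: Dn_def)
    then show "(d + n div d) mod 4 = 2" using n mod4_sum1 by metis
  qed
  finally have A: "(\<Sum>d\<in>Dn n. d + n div d) mod 4 = (2 * int (card (Dn n))) mod 4" by (simp add: mult.commute)
  have B: "(\<Sum>d\<in>{d. 0 < d \<and> d * d = n}. d) = (if \<exists>s>0. s * s = n then (THE s. s > 0 \<and> s * s = n) else 0)"
  proof (cases "\<exists>s>0. s * s = n")
    case True
    then obtain s where s: "s > 0" "s * s = n" by blast
    have "{d. 0 < d \<and> d * d = n} = {s}" using s sq_unique by auto
    moreover have "(THE s. s > 0 \<and> s * s = n) = s" using s sq_unique by blast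
    ultimately show ?thesis using True by simp
  next
    case False
    then have e: "{d. 0 < d \<and> d * d = n} = {}" by auto
    show ?thesis using False by (simp only: e sum.empty) simp
  qed
  show ?thesis unfolding sig_split[OF n(2)] B by (rule mod_add_cong[OF A refl])
qed

lemma sig_mod4_3:
  assumes n: "n mod 4 = 3" "0 < n"
  shows "sig n mod 4 = 0"
proof -
  have "(\<Sum>d\<in>Dn n. d + n div d) mod 4 = (\<Sum>d\<in>Dn n. (d + n div d) mod 4) mod 4" by (simp add: mod_sum_eq)
  also have "(\<Sum>d\<in>Dn n. (d + n div d) mod 4) = (\<Sum>d\<in>Dn n. 0)"
  proof (rule sum.cong[OF refl])
    fix d assume "d \<in> Dn n"
    then have "n = d * (n div d)" by (auto simp: Dn_def)
    then show "(d + n div d) mod 4 = 0" using n mod4_sum3 by metis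
  qed
  finally have A: "(\<Sum>d\<in>Dn n. d + n div d) mod 4 = 0" by simp
  have e: "{d. 0 < d \<and> d * d = n} = {}"
  proof (rule ccontr)
    assume "{d. 0 < d \<and> d * d = n} \<noteq> {}"
    then obtain d where d: "d * d = n" by auto
    have "(d mod 4 * (d mod 4)) mod 4 = 3" using d n by (simp add: mod_mult_eq)
    moreover have "d mod 4 \<in> {0,1,2,3}" by auto
    ultimately show False by auto
  qed
  show ?thesis unfolding sig_split[OF n(2)] e using A by simp
qed

lemma RSp_empty3: "n mod 4 = 3 \<Longrightarrow> RSp n = {}"
proof (rule ccontr)
  assume n: "n mod 4 = 3" "RSp n \<noteq> {}"
  then obtain u v where q: "odd u" "odd v" "u*u + v*v = 2*n" by (auto simp: RSp_def)
  obtain i where i: "u = 2*i+1" using q by (metis oddE)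
  obtain j where j: "v = 2*j+1" using q by (metis oddE)
  have "n = 2*(i*i + i + j*j + j) + 1" using q i j by (simp add: algebra_simps)
  moreover obtain a where "i*i + i = 2*a" using evenE[of "i*i + i"] by auto
  moreover obtain b where "j*j + j = 2*b" using evenE[of "j*j + j"] by auto
  ultimately have "n = 4*(a + b) + 1" by simp
  then have "n mod 4 = 1" by presburger
  then show False using n by simp
qed

lemma NT_main:
  assumes "odd n" "0 < n"
  shows "int (card (RSp n)) mod 4 = sig n mod 4"
proof -
  have "n mod 4 = 1 \<or> n mod 4 = 3"
  proof -
    have "n mod 4 \<in> {0,1,2,3}" by auto
    moreover have "odd (n mod 4)" using assms(1) by (simp add: odd_iff_mod_2_eq_one mod_mod_cancel)
    ultimately show ?thesis by auto
  qed
  then show ?thesis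
  proof
    assume "n mod 4 = 1"
    then show ?thesis using RSp_mod4 sig_mod4_1 assms by simp
  next
    assume "n mod 4 = 3"
    then show ?thesis using RSp_empty3 sig_mod4_3 assms by simp
  qed
qed

definition fint :: "rat fps \<Rightarrow> bool" where
  "fint f \<longleftrightarrow> (\<forall>n. fps_nth f n \<in> \<int>)"

definition fd2 :: "rat fps \<Rightarrow> bool" where
  "fd2 f \<longleftrightarrow> (\<forall>n. fps_nth f n / 2 \<in> \<int>)"

definition fc2 :: "rat fps \<Rightarrow> rat fps \<Rightarrow> bool" where
  "fc2 f g \<longleftrightarrow> fd2 (f - g)"

lemma fint_0[simp]: "fint 0" by (simp add: fint_def)
lemma fint_1[simp]: "fint 1" by (simp add: fint_def fps_one_nth)
lemma fint_X[simp]: "fint fps_X" by (simp add: fint_def fps_X_def)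
lemma fint_Xpow[simp]: "fint (fps_X ^ e)" by (simp add: fint_def)
lemma fint_add[simp]: "fint f \<Longrightarrow> fint g \<Longrightarrow> fint (f + g)" by (simp add: fint_def)
lemma fint_diff[simp]: "fint f \<Longrightarrow> fint g \<Longrightarrow> fint (f - g)" by (simp add: fint_def)
lemma fint_uminus[simp]: "fint f \<Longrightarrow> fint (- f)" by (simp add: fint_def)
lemma fint_mult[simp]: "fint f \<Longrightarrow> fint g \<Longrightarrow> fint (f * g)"
  unfolding fint_def fps_mult_nth by (auto intro!: Ints_sum Ints_mult)
lemma fint_sum: "(\<And>i. i \<in> A \<Longrightarrow> fint (f i)) \<Longrightarrow> fint (\<Sum>i\<in>A. f i)"
  unfolding fint_def fps_sum_nth by (auto intro!: Ints_sum)
lemma fint_prod: "(\<And>i. i \<in> A \<Longrightarrow> fint (f i)) \<Longrightarrow> fint (\<Prod>i\<in>A. f i)"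
  by (induction A rule: infinite_finite_induct) auto
lemma fint_power[simp]: "fint f \<Longrightarrow> fint (f ^ n)"
  by (induction n) auto

lemma fint_inverse:
  assumes f: "fint f" and f0: "fps_nth f 0 = 1"
  shows "fint (inverse f)"
  unfolding fint_def
proof
  fix n show "fps_nth (inverse f) n \<in> \<int>"
  proof (induction n rule: less_induct)
    case (less n)
    show ?case
    proof (cases n)
      case 0 then show ?thesis using f0 by simp
    next
      case (Suc n')
      have "f * inverse f = 1" using f0 by (simp add: inverse_mult_eq_1')
      then have "fps_nth (f * inverse f) n = 0" using Suc by simp
      then have "(\<Sum>i=0..n. fps_nth f i * fps_nth (inverse f) (n - i)) = 0" by (simp add: fps_mult_nth)
      moreover have "(\<Sum>i=0..n. fps_nth f i * fps_nth (inverse f) (n - i))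
          = fps_nth f 0 * fps_nth (inverse f) n + (\<Sum>i=Suc 0..n. fps_nth f i * fps_nth (inverse f) (n - i))"
        by (simp add: sum.atLeast_Suc_atMost)
      ultimately have e: "fps_nth (inverse f) n = - (\<Sum>i=Suc 0..n. fps_nth f i * fps_nth (inverse f) (n - i))"
        using f0 by simp
      have "(\<Sum>i=Suc 0..n. fps_nth f i * fps_nth (inverse f) (n - i)) \<in> \<int>"
      proof (rule Ints_sum)
        fix i assume "i \<in> {Suc 0..n}"
        then have "n - i < n" by simp
        then show "fps_nth f i * fps_nth (inverse f) (n - i) \<in> \<int>"
          using less.IH f by (simp add: fint_def Ints_mult)
      qed
      then show ?thesis using e by simp
    qed
  qed
qed

lemma fd2_mult: "fd2 h \<Longrightarrow> fint g \<Longrightarrow> fd2 (h * g)"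
proof -
  assume h: "fd2 h" and g: "fint g"
  show "fd2 (h * g)" unfolding fd2_def
  proof
    fix n
    have "fps_nth (h * g) n / 2 = (\<Sum>i=0..n. (fps_nth h i / 2) * fps_nth g (n - i))"
      by (simp add: fps_mult_nth sum_divide_distrib)
    also have "\<dots> \<in> \<int>"
    proof (rule Ints_sum)
      fix i show "(fps_nth h i / 2) * fps_nth g (n - i) \<in> \<int>"
        using h g unfolding fd2_def fint_def by (intro Ints_mult) auto
    qed
    finally show "fps_nth (h * g) n / 2 \<in> \<int>" .
  qed
qed

lemma fd2_add: "fd2 f \<Longrightarrow> fd2 g \<Longrightarrow> fd2 (f + g)"
  unfolding fd2_def by (simp add: add_divide_distrib)

lemma fd2_uminus: "fd2 f \<Longrightarrow> fd2 (- f)"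
  unfolding fd2_def by simp

lemma fc2_refl[simp]: "fc2 f f" by (simp add: fc2_def fd2_def)
lemma fc2_sym: "fc2 f g \<Longrightarrow> fc2 g f"
  unfolding fc2_def using fd2_uminus by fastforce
lemma fc2_trans: "fc2 f g \<Longrightarrow> fc2 g h \<Longrightarrow> fc2 f h"
  unfolding fc2_def using fd2_add by fastforce
lemma fc2_add: "fc2 f f' \<Longrightarrow> fc2 g g' \<Longrightarrow> fc2 (f + g) (f' + g')"
  unfolding fc2_def using fd2_add by (metis add_diff_add)
lemma fc2_mult:
  assumes "fc2 f f'" "fc2 g g'" "fint f'" "fint g"
  shows "fc2 (f * g) (f' * g')"
proof -
  have "f * g - f' * g' = (f - f') * g + (g - g') * f'" by (simp add: algebra_simps)
  moreover have "fd2 ((f - f') * g)" using assms fd2_mult fc2_def by blast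
  moreover have "fd2 ((g - g') * f')" using assms fd2_mult fc2_def by blast
  ultimately show ?thesis unfolding fc2_def using fd2_add by simp
qed

lemma fc2_inverse:
  assumes "fc2 f g" "fint f" "fint g" "fps_nth f 0 = 1" "fps_nth g 0 = 1"
  shows "fc2 (inverse f) (inverse g)"
proof -
  have "inverse f - inverse g = (g - f) * (inverse f * inverse g)"
  proof -
    have "inverse f - inverse g = inverse f * (g * inverse g) - inverse g * (f * inverse f)"
      using assms by (simp add: inverse_mult_eq_1')
    then show ?thesis by (simp add: algebra_simps)
  qed
  moreover have "fd2 (g - f)" using assms(1) fc2_sym fc2_def by blast
  moreover have "fint (inverse f * inverse g)" using assms by (simp add: fint_inverse)
  ultimately show ?thesis unfolding fc2_def using fd2_mult by simp
qed

lemma fc2_sum: "(\<And>i. i \<in> A \<Longrightarrow> fc2 (f i) (g i)) \<Longrightarrow> fc2 (\<Sum>i\<in>A. f i) (\<Sum>i\<in>A. g i)"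
  by (induction A rule: infinite_finite_induct) (auto intro: fc2_add)

lemma fc2_prod: "(\<And>i. i \<in> A \<Longrightarrow> fc2 (f i) (g i)) \<Longrightarrow> (\<And>i. i \<in> A \<Longrightarrow> fint (f i)) \<Longrightarrow> (\<And>i. i \<in> A \<Longrightarrow> fint (g i))
   \<Longrightarrow> fc2 (\<Prod>i\<in>A. f i) (\<Prod>i\<in>A. g i)"
proof (induction A rule: infinite_finite_induct)
  case (insert x F)
  then show ?case by (simp, intro fc2_mult) (auto intro: fint_prod)
qed auto

lemma fc2_pm: "fc2 (1 - fps_X ^ e) (1 + fps_X ^ e)"
proof -
  have "(1 - fps_X ^ e) - (1 + fps_X ^ e) = - (fps_X ^ e + fps_X ^ e :: rat fps)" by simp
  moreover have "fd2 (fps_X ^ e + fps_X ^ e :: rat fps)" unfolding fd2_def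
  proof
    fix n
    have "fps_nth (fps_X ^ e + fps_X ^ e :: rat fps) n = (if n = e then 2 else 0)"
      by (simp only: fps_add_nth fps_X_power_nth) simp
    then show "fps_nth (fps_X ^ e + fps_X ^ e :: rat fps) n / 2 \<in> \<int>" by simp
  qed
  ultimately show ?thesis unfolding fc2_def using fd2_uminus by simp
qed

abbreviation "XX \<equiv> (fps_X :: rat fps)"

lemma Nk_eq: "fqpoch XX (XX ^ 2) k = (\<Prod>j<k. 1 - XX ^ (2*j+1))"
  unfolding fqpoch_def by (rule prod.cong) (auto simp: power_mult[symmetric] power_add mult.commute)

lemma Dk_eq: "fqpoch (- XX) (XX ^ 2) k = (\<Prod>j<k. 1 + XX ^ (2*j+1))"
  unfolding fqpoch_def by (rule prod.cong) (auto simp: power_mult[symmetric] power_add mult.commute)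

lemma prod_nth0: "fps_nth (\<Prod>j<k. 1 + c * XX ^ (2*j+1)) 0 = 1"
  by (induction k) (auto simp: fps_mult_nth_0)

lemma Nk0: "fps_nth (\<Prod>j<k. 1 - XX ^ (2*j+1)) 0 = 1"
  by (induction k) (auto simp: fps_mult_nth_0)
lemma Dk0: "fps_nth (\<Prod>j<k. 1 + XX ^ (2*j+1)) 0 = 1"
  by (induction k) (auto simp: fps_mult_nth_0)

definition Nk :: "nat \<Rightarrow> rat fps" where "Nk k = (\<Prod>j<k. 1 - XX ^ (2*j+1))"
definition Dk :: "nat \<Rightarrow> rat fps" where "Dk k = (\<Prod>j<k. 1 + XX ^ (2*j+1))"
definition rr :: "nat \<Rightarrow> rat fps" where "rr k = Nk k * inverse (Dk k)"

lemma Nk_Suc: "Nk (Suc k) = Nk k * (1 - XX ^ (2*k+1))" by (simp add: Nk_def)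
lemma Dk_Suc: "Dk (Suc k) = Dk k * (1 + XX ^ (2*k+1))" by (simp add: Dk_def)
lemma Nk_0[simp]: "Nk 0 = 1" by (simp add: Nk_def)
lemma Dk_0[simp]: "Dk 0 = 1" by (simp add: Dk_def)

lemma Dk_nth0: "fps_nth (Dk k) 0 = 1"
  by (induction k) (simp_all add: Dk_Suc fps_mult_nth_0 del: power_Suc)
lemma fint_Nk: "fint (Nk k)"
  by (induction k) (simp_all add: Nk_Suc del: power_Suc)
lemma fint_Dk: "fint (Dk k)"
  by (induction k) (simp_all add: Dk_Suc del: power_Suc)
lemma fc2_NkDk: "fc2 (Nk k) (Dk k)"
proof (induction k)
  case 0 then show ?case by simp
next
  case (Suc k)
  show ?case unfolding Nk_Suc Dk_Suc
    by (rule fc2_mult[OF Suc fc2_pm]) (simp_all add: fint_Dk del: power_Suc)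
qed

definition Tt :: "nat \<Rightarrow> rat fps" where "Tt k = XX ^ k * inverse (1 + XX ^ (2*k))"
definition Vt :: "nat \<Rightarrow> rat fps" where
  "Vt k = XX ^ k * inverse (1 + XX ^ (2*k)) * (\<Sum>j<k. rr j * XX ^ (2*j+1) * inverse (1 + XX ^ (2*j+1)))"
definition St :: "nat \<Rightarrow> rat fps" where
  "St k = XX ^ k * inverse (1 - XX ^ (2*k)) * (\<Sum>j<k. XX ^ (2*j+1) * inverse (1 - XX ^ (2*j+1)))"

lemma onepm0: "0 < e \<Longrightarrow> fps_nth (1 + XX ^ e) 0 = 1" "0 < e \<Longrightarrow> fps_nth (1 - XX ^ e) 0 = 1"
  by auto

lemma inv1px: "0 < e \<Longrightarrow> (1 + XX ^ e) * inverse (1 + XX ^ e) = 1"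
  by (rule inverse_mult_eq_1') simp

lemma rr_Suc: "rr (Suc j) - rr j = - (rr j * XX ^ (2*j+1) * inverse (1 + XX ^ (2*j+1)) + rr j * XX ^ (2*j+1) * inverse (1 + XX ^ (2*j+1)))"
proof -
  let ?x = "XX ^ (2*j+1)"
  let ?i = "inverse (1 + ?x)"
  have "inverse (Dk (Suc j)) = inverse (Dk j) * ?i"
    by (simp add: Dk_def fps_inverse_mult)
  then have "rr (Suc j) = rr j * ((1 - ?x) * ?i)" by (simp add: rr_def Nk_def algebra_simps)
  moreover have "(1 + ?x) * ?i = 1" by (rule inv1px) simp
  ultimately have "rr (Suc j) - rr j = rr j * ((1 - ?x) * ?i) - rr j * ((1 + ?x) * ?i)" by simp
  then show ?thesis by (simp add: algebra_simps)
qed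

lemma Aterm_eq:
  assumes k: "0 < k"
  shows "Aterm k = Tt k - (Vt k + Vt k)"
proof -
  let ?I = "inverse (1 + XX ^ (2*k))"
  have d0: "fps_nth (Dk k * (1 + XX ^ (2*k))) 0 \<noteq> 0" using k by (simp add: Dk_nth0 fps_mult_nth_0)
  have "Aterm k = XX ^ k * Nk k * inverse (Dk k * (1 + XX ^ (2*k)))"
    unfolding Aterm_def Nk_eq Dk_eq Nk_def[symmetric] Dk_def[symmetric] using d0 by (simp add: fps_divide_unit)
  also have "\<dots> = XX ^ k * rr k * ?I" by (simp only: rr_def fps_inverse_mult mult.assoc)
  also have "rr k = 1 + (\<Sum>j<k. rr (Suc j) - rr j)"
  proof -
    have "rr 0 = 1" by (simp add: rr_def)
    then show ?thesis by (simp only: sum_lessThan_telescope) simp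
  qed
  finally show ?thesis unfolding rr_Suc Tt_def Vt_def
    by (simp add: algebra_simps sum_negf sum.distrib sum_distrib_left)
qed

lemma fint_rr: "fint (rr j)"
  unfolding rr_def by (simp add: fint_inverse fint_Nk fint_Dk Dk_nth0)

lemma fint_Tt: "0 < k \<Longrightarrow> fint (Tt k)"
  unfolding Tt_def by (simp add: fint_inverse)

lemma fint_Vt: "0 < k \<Longrightarrow> fint (Vt k)"
  unfolding Vt_def by (auto simp: fint_inverse fint_rr intro!: fint_sum fint_mult)

lemma fc2_inv: "0 < e \<Longrightarrow> fc2 (inverse (1 + XX ^ e)) (inverse (1 - XX ^ e))"
  by (rule fc2_inverse) (auto intro: fc2_sym fc2_pm)

lemma fc2_rr: "fc2 (rr j) 1"
proof -
  have a: "fc2 (Nk j) (Dk j)" by (rule fc2_NkDk)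
  have b: "fint (inverse (Dk j))" by (simp add: fint_inverse fint_Dk Dk_nth0)
  have "fc2 (Nk j * inverse (Dk j)) (Dk j * inverse (Dk j))"
    by (rule fc2_mult[OF a fc2_refl]) (auto simp: b fint_Dk)
  moreover have "Dk j * inverse (Dk j) = 1" by (rule inverse_mult_eq_1') (simp add: Dk_nth0)
  ultimately show ?thesis by (simp add: rr_def)
qed

lemma fc2_Vt: "0 < k \<Longrightarrow> fc2 (Vt k) (St k)"
  unfolding Vt_def St_def
proof (rule fc2_mult)
  assume k: "0 < k"
  show "fc2 (XX ^ k * inverse (1 + XX ^ (2 * k))) (XX ^ k * inverse (1 - XX ^ (2 * k)))"
    by (rule fc2_mult[OF fc2_refl fc2_inv]) (use k in \<open>auto simp: fint_inverse\<close>)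
  show "fc2 (\<Sum>j<k. rr j * XX ^ (2 * j + 1) * inverse (1 + XX ^ (2 * j + 1)))
            (\<Sum>j<k. XX ^ (2 * j + 1) * inverse (1 - XX ^ (2 * j + 1)))"
  proof (rule fc2_sum)
    fix j
    have "fc2 (rr j * XX ^ (2 * j + 1) * inverse (1 + XX ^ (2 * j + 1))) (1 * XX ^ (2 * j + 1) * inverse (1 - XX ^ (2 * j + 1)))"
      by (intro fc2_mult fc2_rr fc2_refl fc2_inv) (auto simp: fint_rr fint_inverse)
    then show "fc2 (rr j * XX ^ (2 * j + 1) * inverse (1 + XX ^ (2 * j + 1))) (XX ^ (2 * j + 1) * inverse (1 - XX ^ (2 * j + 1)))"
      by simp
  qed
  show "fint (XX ^ k * inverse (1 - XX ^ (2 * k)))" using k by (simp add: fint_inverse)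
  show "fint (\<Sum>j<k. rr j * XX ^ (2 * j + 1) * inverse (1 + XX ^ (2 * j + 1)))"
    by (auto simp: fint_inverse fint_rr intro!: fint_sum)
qed

definition W4 :: "int \<Rightarrow> (int \<times> int \<times> int \<times> int) set" where
  "W4 n = {(k,m,d,t). 0 < k \<and> 0 < m \<and> 0 < d \<and> 0 < t \<and> odd m \<and> odd d \<and> d < 2*k \<and> k*m + d*t = n}"

definition Om :: "int \<Rightarrow> (int \<times> int \<times> int \<times> int) set" where
  "Om n = {(k,m,d,t). 0 < k \<and> 0 < m \<and> 0 < d \<and> 0 < t \<and> even k \<and> odd t \<and> odd m \<and> odd d \<and> k*m + d*t = n}"

lemma box4: "{(k,m,d,t). 0 < k \<and> 0 < m \<and> 0 < d \<and> 0 < t \<and> k*m + d*t = (n::int)} \<subseteq> {0..n} \<times> {0..n} \<times> {0..n} \<times> {0..n}"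
proof
  fix p assume "p \<in> {(k,m,d,t). 0 < k \<and> 0 < m \<and> 0 < d \<and> 0 < t \<and> k*m + d*t = (n::int)}"
  then obtain k m d t where p: "p = (k,m,d,t)" "0 < k" "0 < m" "0 < d" "0 < t" "k*m + d*t = n" by auto
  have "k \<le> k*m" "m \<le> k*m" "d \<le> d*t" "t \<le> d*t" using p by (simp_all add: mult_le_cancel_left1 mult_le_cancel_right1)
  then have "0 \<le> k \<and> k \<le> n \<and> 0 \<le> m \<and> m \<le> n \<and> 0 \<le> d \<and> d \<le> n \<and> 0 \<le> t \<and> t \<le> n" using p by linarith
  then show "p \<in> {0..n} \<times> {0..n} \<times> {0..n} \<times> {0..n}" using p by auto
qed

lemma fin4: "finite {(k,m,d,t). 0 < k \<and> 0 < m \<and> 0 < d \<and> 0 < t \<and> k*m + d*t = (n::int)}"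
  by (rule finite_subset[OF box4]) auto

lemma finite_W4: "finite (W4 n)"
  by (rule finite_subset[OF _ fin4[of n]]) (auto simp: W4_def)

lemma finite_Om: "finite (Om n)"
  by (rule finite_subset[OF _ fin4[of n]]) (auto simp: Om_def)

lemma W4_even:
  assumes n: "odd n"
  shows "even (card (W4 n))"
proof -
  let ?Wa = "{p \<in> Om n. case p of (k,m,d,t) \<Rightarrow> d < 2*k}"
  let ?Wb = "{p \<in> W4 n. case p of (k,m,d,t) \<Rightarrow> odd k}"
  let ?Mb = "{p \<in> Om n. case p of (k,m,d,t) \<Rightarrow> m < 2*d}"
  let ?Ga = "{p \<in> Om n. case p of (k,m,d,t) \<Rightarrow> 2*k < d}"
  let ?Gb = "{p \<in> Om n. case p of (k,m,d,t) \<Rightarrow> 2*d < m}"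
  have fOm: "finite (Om n)" by (rule finite_Om)
  have split: "W4 n = ?Wa \<union> ?Wb"
  proof
    show "W4 n \<subseteq> ?Wa \<union> ?Wb"
    proof
      fix p assume p: "p \<in> W4 n"
      then obtain k m d t where pp: "p = (k,m,d,t)" "0 < k" "0 < m" "0 < d" "0 < t" "odd m" "odd d" "d < 2*k" "k*m + d*t = n"
        by (auto simp: W4_def)
      show "p \<in> ?Wa \<union> ?Wb"
      proof (cases "odd k")
        case True then show ?thesis using p pp by auto
      next
        case False
        then have "even (k*m)" by simp
        then have "odd t" using n pp by (metis even_add even_mult_iff)
        then show ?thesis using pp False by (auto simp: Om_def)
      qed
    qed
    show "?Wa \<union> ?Wb \<subseteq> W4 n" by (auto simp: Om_def W4_def)
  qed
  have disj: "?Wa \<inter> ?Wb = {}" by (auto simp: Om_def)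
  have fin: "finite ?Wa" "finite ?Wb" using fOm finite_W4[of n] by auto
  have c1: "card (W4 n) = card ?Wa + card ?Wb"
  proof -
    have "card (?Wa \<union> ?Wb) = card ?Wa + card ?Wb" by (rule card_Un_disjoint) (use fin disj in auto)
    then show ?thesis using arg_cong[OF split, of card] by simp
  qed
  have c2: "card ?Wb = card ?Mb"
  proof (rule bij_betw_same_card[where f="\<lambda>(k,m,d,t). (t,d,k,m)"])
    show "bij_betw (\<lambda>(k,m,d,t). (t,d,k,m)) ?Wb ?Mb"
    proof (rule bij_betw_byWitness[where f'="\<lambda>(k,m,d,t). (d,t,m,k)"])
      show "\<forall>a\<in>?Wb. (\<lambda>(k,m,d,t). (d,t,m,k)) ((\<lambda>(k,m,d,t). (t,d,k,m)) a) = a" by auto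
      show "\<forall>a\<in>?Mb. (\<lambda>(k,m,d,t). (t,d,k,m)) ((\<lambda>(k,m,d,t). (d,t,m,k)) a) = a" by auto
      show "(\<lambda>(k,m,d,t). (t,d,k,m)) ` ?Wb \<subseteq> ?Mb"
      proof
        fix q assume "q \<in> (\<lambda>(k,m,d,t). (t,d,k,m)) ` ?Wb"
        then obtain k m d t where pp: "q = (t,d,k,m)" "0 < k" "0 < m" "0 < d" "0 < t" "odd m" "odd d" "d < 2*k" "k*m + d*t = n" "odd k"
          by (auto simp: W4_def)
        have "odd (k*m)" using pp by simp
        then have "even t" using n pp by (metis even_add even_mult_iff)
        then show "q \<in> ?Mb" using pp by (auto simp: Om_def algebra_simps)
      qed
      show "(\<lambda>(k,m,d,t). (d,t,m,k)) ` ?Mb \<subseteq> ?Wb"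
      proof
        fix q assume "q \<in> (\<lambda>(k,m,d,t). (d,t,m,k)) ` ?Mb"
        then obtain k m d t where pp: "q = (d,t,m,k)" "0 < k" "0 < m" "0 < d" "0 < t" "odd m" "odd d" "m < 2*d" "k*m + d*t = n" "odd t" "even k"
          by (auto simp: Om_def)
        then show "q \<in> ?Wb" by (auto simp: W4_def algebra_simps)
      qed
    qed
  qed
  have c3: "card ?Ga = card ?Gb"
  proof (rule bij_betw_same_card[where f="\<lambda>(k,m,d,t). (k, m + 2*t, t, d - 2*k)"])
    show "bij_betw (\<lambda>(k,m,d,t). (k, m + 2*t, t, d - 2*k)) ?Ga ?Gb"
    proof (rule bij_betw_byWitness[where f'="\<lambda>(k,m,d,t). (k, m - 2*d, t + 2*k, d)"])
      show "\<forall>a\<in>?Ga. (\<lambda>(k,m,d,t). (k, m - 2*d, t + 2*k, d)) ((\<lambda>(k,m,d,t). (k, m + 2*t, t, d - 2*k)) a) = a" by auto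
      show "\<forall>a\<in>?Gb. (\<lambda>(k,m,d,t). (k, m + 2*t, t, d - 2*k)) ((\<lambda>(k,m,d,t). (k, m - 2*d, t + 2*k, d)) a) = a" by auto
      show "(\<lambda>(k,m,d,t). (k, m + 2*t, t, d - 2*k)) ` ?Ga \<subseteq> ?Gb"
      proof
        fix q assume "q \<in> (\<lambda>(k,m,d,t). (k, m + 2*t, t, d - 2*k)) ` ?Ga"
        then obtain k m d t where pp: "q = (k, m + 2*t, t, d - 2*k)" "0 < k" "0 < m" "0 < d" "0 < t" "odd m" "odd d"
           "even k" "odd t" "2*k < d" "k*m + d*t = n"
          by (auto simp: Om_def)
        have "k * (m + 2*t) + t * (d - 2*k) = k*m + d*t" by (simp add: algebra_simps)
        then show "q \<in> ?Gb" using pp by (auto simp: Om_def)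
      qed
      show "(\<lambda>(k,m,d,t). (k, m - 2*d, t + 2*k, d)) ` ?Gb \<subseteq> ?Ga"
      proof
        fix q assume "q \<in> (\<lambda>(k,m,d,t). (k, m - 2*d, t + 2*k, d)) ` ?Gb"
        then obtain k m d t where pp: "q = (k, m - 2*d, t + 2*k, d)" "0 < k" "0 < m" "0 < d" "0 < t" "odd m" "odd d"
           "even k" "odd t" "2*d < m" "k*m + d*t = n"
          by (auto simp: Om_def)
        have "k * (m - 2*d) + (t + 2*k) * d = k*m + d*t" by (simp add: algebra_simps)
        then show "q \<in> ?Ga" using pp by (auto simp: Om_def)
      qed
    qed
  qed
  have c4: "card (Om n) = card ?Wa + card ?Ga"
  proof -
    have "Om n = ?Wa \<union> ?Ga"
    proof
      show "Om n \<subseteq> ?Wa \<union> ?Ga"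
      proof
        fix p assume p: "p \<in> Om n"
        then obtain k m d t where pp: "p = (k,m,d,t)" "even k" "odd d" by (auto simp: Om_def)
        have "d \<noteq> 2*k" using pp by auto
        then show "p \<in> ?Wa \<union> ?Ga" using p pp by auto
      qed
    qed auto
    moreover have "card (?Wa \<union> ?Ga) = card ?Wa + card ?Ga" by (rule card_Un_disjoint) (use fOm in auto)
    ultimately show ?thesis by (metis (no_types, lifting))
  qed
  have c5: "card (Om n) = card ?Mb + card ?Gb"
  proof -
    have "Om n = ?Mb \<union> ?Gb"
    proof
      show "Om n \<subseteq> ?Mb \<union> ?Gb"
      proof
        fix p assume p: "p \<in> Om n"
        then obtain k m d t where pp: "p = (k,m,d,t)" "odd m" by (auto simp: Om_def)
        have "m \<noteq> 2*d" using pp by auto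
        then show "p \<in> ?Mb \<union> ?Gb" using p pp by auto
      qed
    qed auto
    moreover have "card (?Mb \<union> ?Gb) = card ?Mb + card ?Gb" by (rule card_Un_disjoint) (use fOm in auto)
    ultimately show ?thesis by (metis (no_types, lifting))
  qed
  have "card ?Wb = card ?Wa" using c2 c3 c4 c5 by simp
  then show ?thesis using c1 by simp
qed

lemma inv_gp:
  assumes e: "0 < e"
  shows "inverse (1 - XX ^ e) = Abs_fps (\<lambda>i. if e dvd i then 1 else 0)"
proof -
  let ?G = "Abs_fps (\<lambda>i. if e dvd i then 1 else 0) :: rat fps"
  have "(1 - XX ^ e) * ?G = 1"
  proof (rule fps_ext)
    fix n
    have "fps_nth ((1 - XX ^ e) * ?G) n = fps_nth ?G n - fps_nth (?G * XX ^ e) n"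
      by (simp add: algebra_simps)
    also have "\<dots> = (if n = 0 then 1 else 0)"
    proof (cases "n < e")
      case True
      then have "e dvd n \<longleftrightarrow> n = 0" using e by (auto dest: dvd_imp_le)
      then show ?thesis using True by (simp add: fps_X_power_mult_right_nth)
    next
      case False
      then have "e dvd n \<longleftrightarrow> e dvd (n - e)" by (simp add: dvd_minus_self)
      then show ?thesis using False e by (simp add: fps_X_power_mult_right_nth)
    qed
    finally show "fps_nth ((1 - XX ^ e) * ?G) n = fps_nth 1 n" by simp
  qed
  then show ?thesis by (rule fps_inverse_unique)
qed

lemma inv_gpp:
  assumes e: "0 < e"
  shows "inverse (1 + XX ^ e) = Abs_fps (\<lambda>i. if e dvd i then (-1) ^ (i div e) else 0)"
proof -
  let ?G = "Abs_fps (\<lambda>i. if e dvd i then (-1) ^ (i div e) else 0) :: rat fps"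
  have "(1 + XX ^ e) * ?G = 1"
  proof (rule fps_ext)
    fix n
    have "fps_nth ((1 + XX ^ e) * ?G) n = fps_nth ?G n + fps_nth (?G * XX ^ e) n"
      by (simp add: algebra_simps)
    also have "\<dots> = (if n = 0 then 1 else 0)"
    proof (cases "n < e")
      case True
      then have "e dvd n \<longleftrightarrow> n = 0" using e by (auto dest: dvd_imp_le)
      then show ?thesis using True by (simp add: fps_X_power_mult_right_nth)
    next
      case False
      then have ee: "e dvd n \<longleftrightarrow> e dvd (n - e)" by (simp add: dvd_minus_self)
      show ?thesis
      proof (cases "e dvd n")
        case True
        then obtain q where q: "n = e * q" by blast
        then have "0 < q" using False e by (cases q) auto
        have "n - e = e * (q - 1)" using q by (simp add: diff_mult_distrib2)
        then have "n div e = Suc (q - 1)" "(n - e) div e = q - 1" using q e \<open>0 < q\<close>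
          by simp_all
        then show ?thesis using False True ee e by (simp add: fps_X_power_mult_right_nth)
      next
        case False2: False
        then show ?thesis using False ee e by (simp add: fps_X_power_mult_right_nth)
      qed
    qed
    finally show "fps_nth ((1 + XX ^ e) * ?G) n = fps_nth 1 n" by simp
  qed
  then show ?thesis by (rule fps_inverse_unique)
qed

lemma Tt_nth:
  assumes k: "0 < k"
  shows "fps_nth (Tt k) n = (if k \<le> n \<and> (2*k) dvd (n - k) then (-1) ^ ((n - k) div (2*k)) else 0)"
  using k by (simp add: Tt_def inv_gpp fps_X_power_mult_nth)

lemma Xinv_nth:
  assumes e: "0 < e"
  shows "fps_nth (XX ^ a * inverse (1 - XX ^ e)) i = (if a \<le> i \<and> e dvd (i - a) then 1 else 0)"
  using e by (simp add: inv_gp fps_X_power_mult_nth)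

definition OA :: "nat \<Rightarrow> rat fps" where "OA k = XX ^ k * inverse (1 - XX ^ (2*k))"
definition OB :: "nat \<Rightarrow> rat fps" where "OB d = XX ^ d * inverse (1 - XX ^ d)"

lemma OA_nth: "0 < k \<Longrightarrow> fps_nth (OA k) i = (if k \<le> i \<and> (2*k) dvd (i - k) then 1 else 0)"
  unfolding OA_def by (rule Xinv_nth) simp
lemma OB_nth: "0 < d \<Longrightarrow> fps_nth (OB d) i = (if d \<le> i \<and> d dvd (i - d) then 1 else 0)"
  unfolding OB_def by (rule Xinv_nth)

lemma St_OA: "St k = (\<Sum>j<k. OA k * OB (2*j+1))"
  unfolding St_def OA_def OB_def by (simp add: sum_distrib_left mult.assoc)

lemma St_nth:
  assumes k: "0 < k"
  shows "fps_nth (St k) n = (\<Sum>j<k. \<Sum>i=0..n. (if k \<le> i \<and> (2*k) dvd (i - k) then 1 else 0) *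
                                            (if 2*j+1 \<le> n - i \<and> (2*j+1) dvd (n - i - (2*j+1)) then 1 else 0))"
proof -
  have "fps_nth (St k) n = (\<Sum>j<k. \<Sum>i=0..n. fps_nth (OA k) i * fps_nth (OB (2*j+1)) (n - i))"
    unfolding St_OA by (simp only: fps_sum_nth fps_mult_nth)
  also have "\<dots> = (\<Sum>j<k. \<Sum>i=0..n. (if k \<le> i \<and> (2*k) dvd (i - k) then 1 else 0) *
                                            (if 2*j+1 \<le> n - i \<and> (2*j+1) dvd (n - i - (2*j+1)) then 1 else 0))"
    by (intro sum.cong refl, subst OA_nth[OF k], subst OB_nth) simp_all
  finally show ?thesis .
qed

definition C3 :: "nat \<Rightarrow> nat \<Rightarrow> nat \<Rightarrow> nat set" where
  "C3 n k j = {i\<in>{0..n}. (k \<le> i \<and> (2*k) dvd (i - k)) \<and> (2*j+1 \<le> n - i \<and> (2*j+1) dvd (n - i - (2*j+1)))}"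

definition W3 :: "nat \<Rightarrow> (nat \<times> nat \<times> nat) set" where
  "W3 n = Sigma {1..n} (\<lambda>k. Sigma {..<k} (\<lambda>j. C3 n k j))"

lemma ifmul: "(if A then 1 else 0) * (if B then 1 else 0) = (of_bool (A \<and> B) :: rat)" by simp

lemma St_sum: "(\<Sum>k\<in>{1..n}. fps_nth (St k) n) = of_nat (card (W3 n))"
proof -
  have "(\<Sum>k\<in>{1..n}. fps_nth (St k) n) = (\<Sum>k\<in>{1..n}. \<Sum>j<k. \<Sum>i\<in>{0..n}.
      (of_bool ((k \<le> i \<and> (2*k) dvd (i - k)) \<and> (2*j+1 \<le> n - i \<and> (2*j+1) dvd (n - i - (2*j+1)))) :: rat))"
  proof (intro sum.cong refl)
    fix k assume "k \<in> {1..n}"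
    then have k: "0 < k" by simp
    show "fps_nth (St k) n = (\<Sum>j<k. \<Sum>i\<in>{0..n}.
      (of_bool ((k \<le> i \<and> (2*k) dvd (i - k)) \<and> (2*j+1 \<le> n - i \<and> (2*j+1) dvd (n - i - (2*j+1)))) :: rat))"
      using St_nth[OF k] by (simp only: ifmul)
  qed
  also have "\<dots> = (\<Sum>k\<in>{1..n}. \<Sum>j<k. of_nat (card (C3 n k j)))"
  proof (intro sum.cong refl)
    fix k j
    have e: "C3 n k j = {0..n} \<inter> {i. (k \<le> i \<and> (2*k) dvd (i - k)) \<and> (2*j+1 \<le> n - i \<and> (2*j+1) dvd (n - i - (2*j+1)))}"
      unfolding C3_def by blast
    show "(\<Sum>i\<in>{0..n}. (of_bool ((k \<le> i \<and> (2*k) dvd (i - k)) \<and> (2*j+1 \<le> n - i \<and> (2*j+1) dvd (n - i - (2*j+1)))) :: rat))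
       = of_nat (card (C3 n k j))"
      unfolding e by simp
  qed
  also have "\<dots> = of_nat (\<Sum>k\<in>{1..n}. \<Sum>j<k. card (C3 n k j))"
    by simp
  also have "(\<Sum>k\<in>{1..n}. \<Sum>j<k. card (C3 n k j)) = card (W3 n)"
  proof -
    have fC: "finite (C3 n k j)" for k j by (simp add: C3_def)
    have "card (W3 n) = (\<Sum>k\<in>{1..n}. card (Sigma {..<k} (\<lambda>j. C3 n k j)))"
      unfolding W3_def by (rule card_SigmaI) (auto intro: finite_SigmaI fC)
    also have "\<dots> = (\<Sum>k\<in>{1..n}. \<Sum>j<k. card (C3 n k j))"
      by (intro sum.cong refl card_SigmaI) (auto intro: fC)
    finally show ?thesis by simp
  qed
  finally show ?thesis .
qed

definition W4n :: "nat \<Rightarrow> (nat \<times> nat \<times> nat \<times> nat) set" where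
  "W4n n = {(k,m,d,t). 0 < k \<and> 0 < m \<and> 0 < d \<and> 0 < t \<and> odd m \<and> odd d \<and> d < 2*k \<and> k*m + d*t = n}"

lemma W3_W4n: "card (W3 n) = card (W4n n)"
proof (rule bij_betw_same_card[where f="\<lambda>(k,j,i). (k, i div k, 2*j+1, (n - i) div (2*j+1))"])
  show "bij_betw (\<lambda>(k,j,i). (k, i div k, 2*j+1, (n - i) div (2*j+1))) (W3 n) (W4n n)"
  proof (rule bij_betw_byWitness[where f'="\<lambda>(k,m,d,t). (k, (d - 1) div 2, k*m)"])
    show "\<forall>a\<in>W3 n. (\<lambda>(k,m,d,t). (k, (d - 1) div 2, k*m)) ((\<lambda>(k,j,i). (k, i div k, 2*j+1, (n - i) div (2*j+1))) a) = a"
    proof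
      fix a assume a: "a \<in> W3 n"
      then obtain k j i where p: "a = (k,j,i)" "1 \<le> k" "k \<le> i" "(2*k) dvd (i - k)" by (auto simp: W3_def C3_def)
      obtain q where "i - k = 2*k*q" using p by blast
      then have "i = k * (2*q + 1)" using p by (simp add: algebra_simps)
      then have "k dvd i" by simp
      then show "(\<lambda>(k,m,d,t). (k, (d - 1) div 2, k*m)) ((\<lambda>(k,j,i). (k, i div k, 2*j+1, (n - i) div (2*j+1))) a) = a"
        using p by simp
    qed
    show "\<forall>a\<in>W4n n. (\<lambda>(k,j,i). (k, i div k, 2*j+1, (n - i) div (2*j+1))) ((\<lambda>(k,m,d,t). (k, (d - 1) div 2, k*m)) a) = a"
    proof
      fix a assume a: "a \<in> W4n n"
      then obtain k m d t where p: "a = (k,m,d,t)" "0 < k" "0 < d" "odd d" "k*m + d*t = n" by (auto simp: W4n_def)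
      obtain jj where jj: "d = 2*jj + 1" using p(4) oddE by blast
      then have "2 * ((d - 1) div 2) + 1 = d" by simp
      moreover have "(n - k*m) div d = t"
      proof -
        have "n - k*m = d*t" using p by simp
        then show ?thesis using p by simp
      qed
      ultimately show "(\<lambda>(k,j,i). (k, i div k, 2*j+1, (n - i) div (2*j+1))) ((\<lambda>(k,m,d,t). (k, (d - 1) div 2, k*m)) a) = a"
        using p by simp
    qed
    show "(\<lambda>(k,j,i). (k, i div k, 2*j+1, (n - i) div (2*j+1))) ` W3 n \<subseteq> W4n n"
    proof
      fix b assume "b \<in> (\<lambda>(k,j,i). (k, i div k, 2*j+1, (n - i) div (2*j+1))) ` W3 n"
      then obtain k j i where p: "b = (k, i div k, 2*j+1, (n - i) div (2*j+1))" "1 \<le> k" "j < k" "i \<le> n"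
        "k \<le> i" "(2*k) dvd (i - k)" "2*j+1 \<le> n - i" "(2*j+1) dvd (n - i - (2*j+1))"
        by (auto simp: W3_def C3_def)
      obtain q where q: "i - k = 2*k*q" using p by blast
      then have iq: "i = k * (2*q + 1)" using p by (simp add: algebra_simps)
      obtain r where r: "n - i - (2*j+1) = (2*j+1) * r" using p by blast
      then have nr: "n - i = (2*j+1) * (r + 1)" using p by (simp add: algebra_simps)
      have "i div k = 2*q + 1" using iq p by simp
      moreover have "(n - i) div (2*j+1) = r + 1" unfolding nr by (rule nonzero_mult_div_cancel_left) simp
      moreover have "k * (2*q+1) + (2*j+1) * (r+1) = n" using iq nr p by simp
      ultimately show "b \<in> W4n n" using p by (auto simp: W4n_def)
    qed
    show "(\<lambda>(k,m,d,t). (k, (d - 1) div 2, k*m)) ` W4n n \<subseteq> W3 n"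
    proof
      fix b assume "b \<in> (\<lambda>(k,m,d,t). (k, (d - 1) div 2, k*m)) ` W4n n"
      then obtain k m d t where p: "b = (k, (d - 1) div 2, k*m)" "0 < k" "0 < m" "0 < d" "0 < t" "odd m" "odd d"
        "d < 2*k" "k*m + d*t = n" by (auto simp: W4n_def)
      obtain q where q: "m = 2*q + 1" using p(6) oddE by blast
      obtain j where j: "d = 2*j + 1" using p(7) oddE by blast
      have jd: "(d - 1) div 2 = j" using j by simp
      have "k \<le> k*m" using p by simp
      moreover have "k*m - k = 2*k*q" using q by (simp add: algebra_simps)
      moreover have "n - k*m = d*t" using p by simp
      moreover have "(2*j+1) dvd (n - k*m - (2*j+1))"
      proof -
        have e1: "n - k*m - d = d*(t - 1)" using p by (simp add: diff_mult_distrib2)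
        show ?thesis unfolding j[symmetric] e1 by (rule dvd_triv_left)
      qed
      moreover have "d \<le> d*t" using p by simp
      moreover have "k*m \<le> n" using p by simp
      moreover have "j < k" using j p by simp
      moreover have "1 \<le> k" using p by simp
      moreover have "k \<le> n" using \<open>k \<le> k*m\<close> \<open>k*m \<le> n\<close> by linarith
      ultimately show "b \<in> W3 n" using p jd j by (auto simp: W3_def C3_def)
    qed
  qed
qed

lemma W4n_W4: "card (W4n n) = card (W4 (int n))"
proof (rule bij_betw_same_card[where f="\<lambda>(k,m,d,t). (int k, int m, int d, int t)"])
  show "bij_betw (\<lambda>(k,m,d,t). (int k, int m, int d, int t)) (W4n n) (W4 (int n))"
  proof (rule bij_betw_byWitness[where f'="\<lambda>(k,m,d,t). (nat k, nat m, nat d, nat t)"])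
    show "\<forall>a\<in>W4n n. (\<lambda>(k,m,d,t). (nat k, nat m, nat d, nat t)) ((\<lambda>(k,m,d,t). (int k, int m, int d, int t)) a) = a" by auto
    show "\<forall>a\<in>W4 (int n). (\<lambda>(k,m,d,t). (int k, int m, int d, int t)) ((\<lambda>(k,m,d,t). (nat k, nat m, nat d, nat t)) a) = a"
      by (auto simp: W4_def)
    show "(\<lambda>(k,m,d,t). (int k, int m, int d, int t)) ` W4n n \<subseteq> W4 (int n)"
    proof
      fix b assume "b \<in> (\<lambda>(k,m,d,t). (int k, int m, int d, int t)) ` W4n n"
      then obtain k m d t where p: "b = (int k, int m, int d, int t)" "0 < k" "0 < m" "0 < d" "0 < t" "odd m" "odd d"
        "d < 2*k" "k*m + d*t = n" by (auto simp: W4n_def)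
      have "int k * int m + int d * int t = int n" using p(9) by (metis of_nat_add of_nat_mult)
      then show "b \<in> W4 (int n)" using p by (auto simp: W4_def)
    qed
    show "(\<lambda>(k,m,d,t). (nat k, nat m, nat d, nat t)) ` W4 (int n) \<subseteq> W4n n"
    proof
      fix b assume "b \<in> (\<lambda>(k,m,d,t). (nat k, nat m, nat d, nat t)) ` W4 (int n)"
      then obtain k m d t where p: "b = (nat k, nat m, nat d, nat t)" "0 < k" "0 < m" "0 < d" "0 < t" "odd m" "odd d"
        "d < 2*k" "k*m + d*t = int n" by (auto simp: W4_def)
      have "nat k * nat m + nat d * nat t = n" using p by (simp add: nat_mult_distrib[symmetric] nat_add_distrib[symmetric])
      moreover have "odd (nat m)" "odd (nat d)" using p by (simp_all add: even_nat_iff)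
      ultimately show "b \<in> W4n n" using p by (auto simp: W4n_def)
    qed
  qed
qed

lemma sign_mod4:
  fixes r :: nat
  shows "[(-1) ^ r = 2 * int r + 1] (mod 4)"
proof (cases "even r")
  case True
  then obtain s where "r = 2*s" by blast
  then show ?thesis by (simp add: cong_iff_dvd_diff power_mult)
next
  case False
  then obtain s where s: "r = 2*s + 1" using oddE by blast
  then have m1: "(-1::int) ^ r = -1" by (simp add: power_mult)
  have e: "(-1::int) - (2 * int r + 1) = 4 * (- int s - 1)" using s by simp
  show ?thesis unfolding cong_iff_dvd_diff m1 e by (rule dvd_triv_left)
qed

lemma t0_mod4:
  assumes n: "odd n"
  shows "[(\<Sum>k\<in>{1..n}. (if k \<le> n \<and> (2*k) dvd (n - k) then (-1) ^ ((n - k) div (2*k)) else 0 :: int))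
          = (\<Sum>k\<in>{k\<in>{1..n}. k dvd n}. int (n div k))] (mod 4)"
proof -
  have "(\<Sum>k\<in>{1..n}. (if k \<le> n \<and> (2*k) dvd (n - k) then (-1) ^ ((n - k) div (2*k)) else 0 :: int))
      = (\<Sum>k\<in>{k\<in>{1..n}. k dvd n}. (-1) ^ ((n - k) div (2*k)))"
  proof -
    have "\<And>k. k \<in> {1..n} \<Longrightarrow> (k \<le> n \<and> (2*k) dvd (n - k)) = (k dvd n)"
    proof -
      fix k assume k: "k \<in> {1..n}"
      show "(k \<le> n \<and> (2*k) dvd (n - k)) = (k dvd n)"
      proof
        assume a: "k \<le> n \<and> (2*k) dvd (n - k)"
        then have "k dvd (n - k)" by (meson dvd_mult_right)
        then have "k dvd (n - k + k)" by simp
        then show "k dvd n" using a by simp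
      next
        assume "k dvd n"
        then obtain q where q: "n = k * q" by blast
        then have "odd q" using n by simp
        then obtain r where r: "q = 2*r + 1" using oddE by blast
        have "n - k = (2*k) * r" using q r by (simp add: algebra_simps)
        then show "k \<le> n \<and> (2*k) dvd (n - k)" using k by simp
      qed
    qed
    then show ?thesis by (simp add: sum.inter_filter[symmetric] cong: if_cong)
  qed
  also have "[\<dots> = (\<Sum>k\<in>{k\<in>{1..n}. k dvd n}. int (n div k))] (mod 4)"
  proof (rule cong_sum)
    fix k assume "k \<in> {k\<in>{1..n}. k dvd n}"
    then have k: "0 < k" "k dvd n" by auto
    then obtain q where q: "n = k * q" by blast
    then have "odd q" using n by simp
    then obtain r where r: "q = 2*r + 1" using oddE by blast
    have "n - k = (2*k) * r" using q r by (simp add: algebra_simps)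
    then have "(n - k) div (2*k) = r" using k by simp
    moreover have "n div k = 2*r + 1" using q r k by simp
    ultimately show "[(-1) ^ ((n - k) div (2*k)) = int (n div k)] (mod 4)" using sign_mod4[of r] by (simp add: add.commute)
  qed
  finally show ?thesis .
qed

lemma divsum_sig:
  assumes n: "0 < n"
  shows "(\<Sum>k\<in>{k\<in>{1..n}. k dvd n}. int (n div k)) = sig (int n)"
proof -
  have "(\<Sum>k\<in>{k\<in>{1..n}. k dvd n}. int (n div k)) = (\<Sum>d\<in>{d\<in>{1..n}. d dvd n}. int d)"
    by (rule sum.reindex_bij_witness[where i="\<lambda>d. n div d" and j="\<lambda>d. n div d"])
       (use n in \<open>auto elim!: dvdE simp: dvd_div_iff_mult\<close>)
  also have "\<dots> = sig (int n)"
    unfolding sig_def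
  proof -
    have h1: "nat a dvd n \<and> 1 \<le> nat a \<and> nat a \<le> n" if a1: "0 < a" "a dvd int n" for a
    proof -
      have ia: "int (nat a) = a" using a1 by simp
      have "nat a dvd n" using a1 ia by (metis int_dvd_int_iff)
      moreover have "a \<le> int n" using a1 n by (simp add: zdvd_imp_le)
      ultimately show ?thesis using a1 by auto
    qed
    show "(\<Sum>d\<in>{d\<in>{1..n}. d dvd n}. int d) = (\<Sum>d\<in>{d. 0 < d \<and> d dvd int n}. d)"
      by (rule sum.reindex_bij_witness[where i="nat" and j="int"]) (use h1 in auto)
  qed
  finally show ?thesis .
qed

lemma div2_nth: "fps_nth (f / 2 :: rat fps) n = fps_nth f n / 2"
proof -
  have "f / 2 = f * inverse (2 :: rat fps)" by (simp add: fps_divide_unit)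
  also have "inverse (2 :: rat fps) = fps_const (1/2)"
    by (rule fps_inverse_unique) (simp only: numeral_fps_const[of "num.Bit0 num.One"] fps_const_mult, simp)
  finally show ?thesis by (simp add: fps_mult_right_const_nth)
qed

lemma LHS_nth: "fps_nth ((Aser - (Aser oo (- fps_X))) / 2) n = (if odd n then fps_nth Aser n else 0)"
  by (simp add: div2_nth fps_compose_uminus')

lemma Aser_odd:
  assumes n: "odd n"
  shows "\<exists>c. fps_nth Aser n = of_int c \<and> [c = sig (int n)] (mod 4)"
proof -
  define t0 :: int where "t0 = (\<Sum>k\<in>{1..n}. (if k \<le> n \<and> (2*k) dvd (n - k) then (-1) ^ ((n - k) div (2*k)) else 0))"
  have A: "fps_nth Aser n = (\<Sum>k\<in>{1..n}. fps_nth (Tt k) n) - 2 * (\<Sum>k\<in>{1..n}. fps_nth (Vt k) n)"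
  proof -
    have "fps_nth Aser n = (\<Sum>k\<in>{1..n}. fps_nth (Aterm k) n)" by (simp add: Aser_def)
    also have "\<dots> = (\<Sum>k\<in>{1..n}. fps_nth (Tt k) n - 2 * fps_nth (Vt k) n)"
    proof (intro sum.cong refl)
      fix k assume "k \<in> {1..n}"
      then have k: "0 < k" by simp
      show "fps_nth (Aterm k) n = fps_nth (Tt k) n - 2 * fps_nth (Vt k) n"
        by (simp only: Aterm_eq[OF k] fps_sub_nth fps_add_nth mult_2)
    qed
    finally show ?thesis by (simp add: sum_subtractf sum_distrib_left)
  qed
  have T: "(\<Sum>k\<in>{1..n}. fps_nth (Tt k) n) = of_int t0"
    unfolding t0_def of_int_sum by (intro sum.cong refl) (simp add: Tt_nth)
  have Vi: "(\<Sum>k\<in>{1..n}. fps_nth (Vt k) n) \<in> \<int>"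
    by (rule Ints_sum) (use fint_Vt in \<open>auto simp: fint_def\<close>)
  have VS: "(\<Sum>k\<in>{1..n}. fps_nth (Vt k) n - fps_nth (St k) n) / 2 \<in> \<int>"
  proof -
    have "(\<Sum>k\<in>{1..n}. fps_nth (Vt k) n - fps_nth (St k) n) / 2 = (\<Sum>k\<in>{1..n}. fps_nth (Vt k - St k) n / 2)"
      by (simp add: sum_divide_distrib)
    also have "\<dots> \<in> \<int>"
      by (rule Ints_sum) (use fc2_Vt in \<open>auto simp: fc2_def fd2_def\<close>)
    finally show ?thesis .
  qed
  have S: "(\<Sum>k\<in>{1..n}. fps_nth (St k) n) / 2 \<in> \<int>"
  proof -
    have "(\<Sum>k\<in>{1..n}. fps_nth (St k) n) = of_nat (card (W4 (int n)))"
      using St_sum W3_W4n W4n_W4 by simp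
    moreover have "even (card (W4 (int n)))" by (rule W4_even) (use n in simp)
    ultimately show ?thesis by (auto elim!: evenE)
  qed
  have "(\<Sum>k\<in>{1..n}. fps_nth (Vt k) n) / 2
      = (\<Sum>k\<in>{1..n}. fps_nth (Vt k) n - fps_nth (St k) n) / 2 + (\<Sum>k\<in>{1..n}. fps_nth (St k) n) / 2"
    by (simp add: sum_subtractf add_divide_distrib[symmetric])
  also have "\<dots> \<in> \<int>" using VS S by simp
  finally obtain w where w: "(\<Sum>k\<in>{1..n}. fps_nth (Vt k) n) / 2 = of_int w" by (auto elim!: Ints_cases)
  have "fps_nth Aser n = of_int (t0 - 4 * w)"
    unfolding A T using w by simp
  moreover have "[t0 - 4 * w = sig (int n)] (mod 4)"
  proof -
    have "[t0 - 4 * w = t0] (mod 4)" by (simp add: cong_iff_dvd_diff)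
    also have "[t0 = (\<Sum>k\<in>{k\<in>{1..n}. k dvd n}. int (n div k))] (mod 4)"
      unfolding t0_def by (rule t0_mod4[OF n])
    also have "(\<Sum>k\<in>{k\<in>{1..n}. k dvd n}. int (n div k)) = sig (int n)"
      by (rule divsum_sig) (use n in \<open>cases n; simp\<close>)
    finally show ?thesis .
  qed
  ultimately show ?thesis by blast
qed

lemma qpinf_nth0: "fps_nth (qpinf m) 0 = 1"
  by (simp add: qpinf_def)

lemma RHS_eq: "fps_X * qpinf 8 ^ 4 / qpinf 4 ^ 2 = fps_X * psi 4 ^ 2"
proof -
  have g: "qpinf 8 ^ 2 = psi 4 * qpinf 4" using gauss[of 4] by simp
  have "qpinf 8 ^ 4 = (qpinf 8 ^ 2) ^ 2" by (simp add: power_mult[symmetric])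
  also have "\<dots> = psi 4 ^ 2 * qpinf 4 ^ 2" unfolding g by (simp add: power_mult_distrib)
  finally have e: "fps_X * qpinf 8 ^ 4 = (fps_X * psi 4 ^ 2) * qpinf 4 ^ 2" by (simp add: mult.assoc)
  have nz: "fps_nth (qpinf 4 ^ 2) 0 \<noteq> 0" by (simp add: power2_eq_square fps_mult_nth_0 qpinf_nth0)
  have "fps_X * qpinf 8 ^ 4 / qpinf 4 ^ 2 = (fps_X * psi 4 ^ 2) * (qpinf 4 ^ 2 * inverse (qpinf 4 ^ 2))"
    unfolding e using nz by (simp add: fps_divide_unit mult.assoc)
  also have "qpinf 4 ^ 2 * inverse (qpinf 4 ^ 2) = 1" using nz by (rule inverse_mult_eq_1')
  finally show ?thesis by simp
qed

definition RS4 :: "nat \<Rightarrow> (nat \<times> nat) set" where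
  "RS4 N = {(a,b). 4 * T a + 4 * T b = N}"

lemma finite_RS4: "finite (RS4 N)"
proof (rule finite_subset)
  show "RS4 N \<subseteq> {..N} \<times> {..N}"
  proof
    fix p assume "p \<in> RS4 N"
    then obtain a b where p: "p = (a,b)" "4 * T a + 4 * T b = N" by (auto simp: RS4_def)
    have "a \<le> T a" "b \<le> T b" by (rule T_ge)+
    then show "p \<in> {..N} \<times> {..N}" using p by auto
  qed
qed simp

lemma psi_sq_nth: "fps_nth (psi 4 ^ 2) N = of_nat (card (RS4 N))"
proof -
  let ?P = "\<lambda>i. (\<exists>a. 4 * T a = i) \<and> (\<exists>b. 4 * T b = N - i)"
  have "fps_nth (psi 4 ^ 2) N = (\<Sum>i=0..N. fps_nth (psi 4) i * fps_nth (psi 4) (N - i))"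
    by (simp add: power2_eq_square fps_mult_nth)
  also have "\<dots> = (\<Sum>i=0..N. (of_bool (?P i) :: rat))"
    by (intro sum.cong refl) (simp add: psi_def)
  also have "\<dots> = of_nat (card ({0..N} \<inter> {i. ?P i}))" by simp
  also have "card ({0..N} \<inter> {i. ?P i}) = card (RS4 N)"
  proof -
    have "inj_on (\<lambda>(a,b). 4 * T a) (RS4 N)"
    proof (rule inj_onI)
      fix x y assume x: "x \<in> RS4 N" and y: "y \<in> RS4 N" and e: "(\<lambda>(a,b). 4 * T a) x = (\<lambda>(a,b). 4 * T a) y"
      obtain a b where xx: "x = (a,b)" "4 * T a + 4 * T b = N" using x by (auto simp: RS4_def)
      obtain a' b' where yy: "y = (a',b')" "4 * T a' + 4 * T b' = N" using y by (auto simp: RS4_def)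
      have "T a = T a'" using e xx yy by simp
      then have "a = a'" by (rule T_inj)
      moreover have "T b = T b'" using xx yy \<open>T a = T a'\<close> by simp
      then have "b = b'" by (rule T_inj)
      ultimately show "x = y" using xx yy by simp
    qed
    moreover have "(\<lambda>(a,b). 4 * T a) ` (RS4 N) = {0..N} \<inter> {i. ?P i}"
    proof
      show "(\<lambda>(a,b). 4 * T a) ` (RS4 N) \<subseteq> {0..N} \<inter> {i. ?P i}"
      proof
        fix i assume "i \<in> (\<lambda>(a,b). 4 * T a) ` (RS4 N)"
        then obtain a b where "i = 4 * T a" "4 * T a + 4 * T b = N" by (auto simp: RS4_def)
        then show "i \<in> {0..N} \<inter> {i. ?P i}" by auto
      qed
      show "{0..N} \<inter> {i. ?P i} \<subseteq> (\<lambda>(a,b). 4 * T a) ` (RS4 N)"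
      proof
        fix i assume "i \<in> {0..N} \<inter> {i. ?P i}"
        then obtain a b where ab: "i \<le> N" "4 * T a = i" "4 * T b = N - i" by auto
        then have "(a,b) \<in> RS4 N" by (auto simp: RS4_def)
        then show "i \<in> (\<lambda>(a,b). 4 * T a) ` (RS4 N)" using ab by force
      qed
    qed
    ultimately show ?thesis by (metis card_image)
  qed
  finally show ?thesis .
qed

lemma T2: "2 * T a = a * (a + 1)"
  by (induction a) (auto simp: algebra_simps)

lemma RS4_RSp:
  assumes n: "0 < n"
  shows "card (RS4 (n - 1)) = card (RSp (int n))"
proof (rule bij_betw_same_card[where f="\<lambda>(a,b). (2 * int a + 1, 2 * int b + 1)"])
  have key: "(2 * int a + 1) * (2 * int a + 1) = 8 * int (T a) + 1" for a
  proof -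
    have "int (2 * T a) = int (a * (a + 1))" by (simp only: T2)
    then have "2 * int (T a) = int a * (int a + 1)" by (simp add: algebra_simps)
    then show ?thesis by (simp add: algebra_simps)
  qed
  show "bij_betw (\<lambda>(a,b). (2 * int a + 1, 2 * int b + 1)) (RS4 (n - 1)) (RSp (int n))"
  proof (rule bij_betw_byWitness[where f'="\<lambda>(u,v). (nat ((u - 1) div 2), nat ((v - 1) div 2))"])
    show "\<forall>x\<in>RS4 (n - 1). (\<lambda>(u,v). (nat ((u - 1) div 2), nat ((v - 1) div 2))) ((\<lambda>(a,b). (2 * int a + 1, 2 * int b + 1)) x) = x"
      by auto
    show "\<forall>y\<in>RSp (int n). (\<lambda>(a,b). (2 * int a + 1, 2 * int b + 1)) ((\<lambda>(u,v). (nat ((u - 1) div 2), nat ((v - 1) div 2))) y) = y"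
    proof
      fix y assume "y \<in> RSp (int n)"
      then obtain u v where y: "y = (u,v)" "0 < u" "0 < v" "odd u" "odd v" by (auto simp: RSp_def)
      obtain i where i: "u = 2*i+1" using y(4) oddE by blast
      obtain j where j: "v = 2*j+1" using y(5) oddE by blast
      have "0 \<le> i" "0 \<le> j" using i j y by simp_all
      then show "(\<lambda>(a,b). (2 * int a + 1, 2 * int b + 1)) ((\<lambda>(u,v). (nat ((u - 1) div 2), nat ((v - 1) div 2))) y) = y"
        using y i j by simp
    qed
    show "(\<lambda>(a,b). (2 * int a + 1, 2 * int b + 1)) ` RS4 (n - 1) \<subseteq> RSp (int n)"
    proof
      fix y assume "y \<in> (\<lambda>(a,b). (2 * int a + 1, 2 * int b + 1)) ` RS4 (n - 1)"
      then obtain a b where y: "y = (2 * int a + 1, 2 * int b + 1)" "4 * T a + 4 * T b = n - 1"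
        by (auto simp: RS4_def)
      then have "4 * int (T a) + 4 * int (T b) = int n - 1" using n by linarith
      then have "(2 * int a + 1) * (2 * int a + 1) + (2 * int b + 1) * (2 * int b + 1) = 2 * int n"
        using key[of a] key[of b] by linarith
      then show "y \<in> RSp (int n)" using y by (auto simp: RSp_def)
    qed
    show "(\<lambda>(u,v). (nat ((u - 1) div 2), nat ((v - 1) div 2))) ` RSp (int n) \<subseteq> RS4 (n - 1)"
    proof
      fix x assume "x \<in> (\<lambda>(u,v). (nat ((u - 1) div 2), nat ((v - 1) div 2))) ` RSp (int n)"
      then obtain u v where x: "x = (nat ((u - 1) div 2), nat ((v - 1) div 2))" "0 < u" "0 < v" "odd u" "odd v"
        "u * u + v * v = 2 * int n" by (auto simp: RSp_def)
      obtain i where i: "u = 2*i+1" using x(4) oddE by blast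
      obtain j where j: "v = 2*j+1" using x(5) oddE by blast
      have ij: "0 \<le> i" "0 \<le> j" using i j x by simp_all
      define a where "a = nat i"
      define b where "b = nat j"
      have ia: "i = int a" "j = int b" using ij by (simp_all add: a_def b_def)
      have "(2 * int a + 1) * (2 * int a + 1) + (2 * int b + 1) * (2 * int b + 1) = 2 * int n"
        using x(6) i j ia by simp
      then have "8 * int (T a) + 8 * int (T b) + 2 = 2 * int n" using key[of a] key[of b] by linarith
      then have "4 * T a + 4 * T b = n - 1" by linarith
      moreover have "x = (a, b)" using x i j ia by simp
      ultimately show "x \<in> RS4 (n - 1)" by (simp add: RS4_def)
    qed
  qed
qed

lemma RSp_even: "even n \<Longrightarrow> RSp n = {}"
proof (rule ccontr)
  assume n: "even n" "RSp n \<noteq> {}"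
  then obtain u v where q: "odd u" "odd v" "u*u + v*v = 2*n" by (auto simp: RSp_def)
  obtain i where i: "u = 2*i+1" using q oddE by blast
  obtain j where j: "v = 2*j+1" using q oddE by blast
  have "n = 2*(i*i + i + j*j + j) + 1" using q i j by (simp add: algebra_simps)
  then show False using n by simp
qed

theorem lemma4p3:
  shows "\<forall>n. \<exists>c d :: int.
     fps_nth ((Aser - (Aser oo (- fps_X))) / 2) n = of_int c \<and>
     fps_nth (fps_X * qpinf 8 ^ 4 / qpinf 4 ^ 2) n = of_int d \<and>
     [c = d] (mod 4)"
proof
  fix n :: nat
  have R: "fps_nth (fps_X * qpinf 8 ^ 4 / qpinf 4 ^ 2) n = of_int (int (card (RSp (int n))))"
  proof (cases "n = 0")
    case True
    then have "RSp (int n) = {}" using RSp_even by simp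
    then show ?thesis using True by (simp add: RHS_eq)
  next
    case False
    then have "fps_nth (fps_X * qpinf 8 ^ 4 / qpinf 4 ^ 2) n = of_nat (card (RS4 (n - 1)))"
      by (simp add: RHS_eq fps_X_mult_nth psi_sq_nth)
    also have "card (RS4 (n - 1)) = card (RSp (int n))" using RS4_RSp False by simp
    finally show ?thesis by simp
  qed
  show "\<exists>c d :: int.
     fps_nth ((Aser - (Aser oo (- fps_X))) / 2) n = of_int c \<and>
     fps_nth (fps_X * qpinf 8 ^ 4 / qpinf 4 ^ 2) n = of_int d \<and>
     [c = d] (mod 4)"
  proof (cases "odd n")
    case True
    obtain c where c: "fps_nth Aser n = of_int c" "[c = sig (int n)] (mod 4)" using Aser_odd[OF True] by blast
    have "int (card (RSp (int n))) mod 4 = sig (int n) mod 4"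
      by (rule NT_main) (use True in \<open>auto simp: odd_pos\<close>)
    then have "[sig (int n) = int (card (RSp (int n)))] (mod 4)" by (simp add: cong_def)
    with c(2) have "[c = int (card (RSp (int n)))] (mod 4)" by (rule cong_trans)
    then show ?thesis unfolding LHS_nth using c(1) R True
      by (intro exI[of _ c] exI[of _ "int (card (RSp (int n)))"]) simp
  next
    case False
    then have "RSp (int n) = {}" using RSp_even by simp
    then show ?thesis unfolding LHS_nth using R False by auto
  qed
qed

end
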